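(* Let $\alpha\in[1,2]$, $\varepsilon\in\mathbb{R}$, $T>0$, and let $U^n_\varepsilon\in V_N$ be the approximate solution at the $n$-th step of the fully discrete scheme \[ (U^{n+1}_\varepsilon,\phi)=(U^n_\varepsilon,\phi)-6\Delta t\left(U^{n+\frac12}_\varepsilon(U^{n+\frac12}_\varepsilon)_x,\phi\right)+\varepsilon^2\Delta t\left(\mathcal{D}^\alpha(U^{n+\frac12}_\varepsilon)_x,\phi\right)\ \ \forall\phi\in V_N,\qquad U^{n+\frac12}_\varepsilon=\tfrac{U^n_\varepsilon+U^{n+1}_\varepsilon}{2}. \] Suppose $(n+1)\Delta t\le T$, and let $\{v^\ell\}_{\ell\ge0}\subset V_N$ be defined by $v^0=U^n_\varepsilon$ and, for $\ell\ge0$, \[ (v^{\ell+1},\phi)=(U^n_\varepsilon,\phi)-\Delta t\left(\mathcal{B}\Big(\tfrac{U^n_\varepsilon+v^\ell}{2}\Big),\phi\right)+\tfrac12\varepsilon^2\Delta t\left(\mathcal{D}^\alpha(U^n_\varepsilon+v^{\ell+1})_x,\phi\right)\quad\forall\phi\in V_N, \] where $\mathcal{B}(v)=6vv_x$. Assume that $\Delta t$ satisfies \[ 6N\Delta t\le\frac{\zeta}{\eta\|U^n_\varepsilon\|_{1+\alpha}}, \] where $\zeta\in(0,1)$ and $\eta=\frac{8-\zeta}{1-\zeta}>8$. Then the sequence $\{v^\ell\}_{\ell\ge0}$ converges, $\lim_{\ell\to\infty}v^\ell=U^{n+1}_\varepsilon$, and \[ \|U^{n+1}_\varepsilon\|_{1+\alpha}\le\eta\|U^n_\varepsilon\|_{1+\alpha}.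 \]
   Context: $I=[-\pi,\pi]$; functions are $2\pi$-periodic. $(u,v)=\int_I u\bar v\,dx$. For $f\in L^2(I)$, $\hat f(k)=\frac{1}{2\pi}\int_I f(x)e^{-ikx}dx$. For $r\ge0$, $\|f\|_r=\left(\sum_{k\in\mathbb{Z}}(1+|k|^2)^r|\hat f(k)|^2\right)^{1/2}$. $V_N$ is the space of real-valued trigonometric polynomials spanned by $\{e^{ikx}:-N\le k\le N\}$, and $\mathcal{D}^\alpha f=\sum_{k}|k|^\alpha\hat f(k)e^{ikx}$. *)

theory Defs
  imports "HOL-Analysis.Analysis"
begin

text \<open>Functions are real-valued functions on the reals (2pi-periodic ones in practice);
  I = [-pi, pi].\<close>

definition l2inner :: "(real \<Rightarrow> real) \<Rightarrow> (real \<Rightarrow> real) \<Rightarrow> real" where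
  "l2inner u v = integral {-pi..pi} (\<lambda>x. u x * v x)"

definition fcoef :: "(real \<Rightarrow> real) \<Rightarrow> int \<Rightarrow> complex" where
  "fcoef f k = integral {-pi..pi} (\<lambda>x. complex_of_real (f x) * cis (- (of_int k * x)))
                / complex_of_real (2 * pi)"

definition sob_norm :: "real \<Rightarrow> (real \<Rightarrow> real) \<Rightarrow> real" where
  "sob_norm r f = sqrt (infsum (\<lambda>k::int. (1 + (of_int k)\<^sup>2) powr r * (cmod (fcoef f k))\<^sup>2) UNIV)"

definition VN :: "nat \<Rightarrow> (real \<Rightarrow> real) set" where
  "VN N = {f. \<exists>c :: int \<Rightarrow> complex. \<forall>x.
      complex_of_real (f x) = (\<Sum>k = - int N..int N. c k * cis (of_int k * x))}"

definition fracD :: "real \<Rightarrow> (real \<Rightarrow> real) \<Rightarrow> real \<Rightarrow> real" where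
  "fracD \<alpha> f x = Re (infsum (\<lambda>k::int. complex_of_real (\<bar>of_int k\<bar> powr \<alpha>) * fcoef f k
                                         * cis (of_int k * x)) UNIV)"

definition Bop :: "(real \<Rightarrow> real) \<Rightarrow> real \<Rightarrow> real" where
  "Bop v x = 6 * v x * deriv v x"

end

theory Submission
  imports Defs "HOL-Analysis.Analysis"
begin

lemma cis_vd:
  fixes m :: int
  shows "((\<lambda>x. cis (of_int m * x)) has_vector_derivative (\<i> * of_int m * cis (of_int m * x))) (at x within S)"
proof -
  have "((\<lambda>x. cis (of_int m * x)) has_derivative (\<lambda>t. (of_int m * t) *\<^sub>R (\<i> * cis (of_int m * x)))) (at x within S)"
    by (intro has_derivative_cis derivative_intros)
  moreover have "(\<lambda>t. (of_int m * t) *\<^sub>R (\<i> * cis (of_int m * x))) = (\<lambda>t. t *\<^sub>R (\<i> * of_int m * cis (of_int m * x)))"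
    by (auto simp: scaleR_conv_of_real field_simps)
  ultimately show ?thesis unfolding has_vector_derivative_def by simp
qed

lemma int_cis:
  fixes m :: int
  shows "((\<lambda>x. cis (of_int m * x)) has_integral (if m = 0 then complex_of_real (2*pi) else 0)) {-pi..pi}"
proof (cases "m = 0")
  case True
  then show ?thesis using has_integral_const_real[of "1::complex" "-pi" pi]
    by (simp add: scaleR_conv_of_real)
next
  case False
  define F where "F x = cis (of_int m * x) / (\<i> * of_int m)" for x
  have d: "(F has_vector_derivative cis (of_int m * x)) (at x within {-pi..pi})" for x
  proof -
    have "(F has_vector_derivative (\<i> * of_int m * cis (of_int m * x)) / (\<i> * of_int m)) (at x within {-pi..pi})"
      unfolding F_def by (intro has_vector_derivative_divide cis_vd)
    then show ?thesis using False by simp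
  qed
  have "((\<lambda>x. cis (of_int m * x)) has_integral (F pi - F (-pi))) {-pi..pi}"
    by (rule fundamental_theorem_of_calculus) (use d in auto)
  moreover have "F pi = F (-pi)"
  proof -
    have "sin (of_int m * pi) = 0" by (metis sin_npi_int mult.commute)
    then have "cis (of_int m * pi) = cis (of_int m * (-pi))"
      by (simp add: complex_eq_iff)
    then show ?thesis by (simp add: F_def)
  qed
  ultimately show ?thesis using False by simp
qed

definition tp :: "nat \<Rightarrow> (int \<Rightarrow> complex) \<Rightarrow> real \<Rightarrow> complex" where
  "tp M c x = (\<Sum>k = - int M..int M. c k * cis (of_int k * x))"

lemma tp_coef:
  "((\<lambda>x. tp M c x * cis (- (of_int k * x))) has_integral
     (if \<bar>k\<bar> \<le> int M then complex_of_real (2*pi) * c k else 0)) {-pi..pi}"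
proof -
  have e: "tp M c x * cis (- (of_int k * x)) = (\<Sum>j = - int M..int M. c j * cis (of_int (j - k) * x))" for x
    unfolding tp_def sum_distrib_right
    by (intro sum.cong refl) (simp add: cis_mult algebra_simps)
  have h1: "((\<lambda>x. \<Sum>j = - int M..int M. c j * cis (of_int (j - k) * x)) has_integral
        (\<Sum>j = - int M..int M. c j * (if j - k = 0 then complex_of_real (2*pi) else 0))) {-pi..pi}"
    by (intro has_integral_sum finite_atLeastAtMost_int has_integral_mult_right int_cis)
  have h2: "(\<Sum>j = - int M..int M. c j * (if j - k = 0 then complex_of_real (2*pi) else 0))
      = (if \<bar>k\<bar> \<le> int M then complex_of_real (2*pi) * c k else 0)"
  proof -
    have "(\<Sum>j = - int M..int M. c j * (if j - k = 0 then complex_of_real (2*pi) else 0))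
       = (\<Sum>j = - int M..int M. (if j = k then c j * complex_of_real (2*pi) else 0))"
      by (intro sum.cong) auto
    also have "\<dots> = (if \<bar>k\<bar> \<le> int M then complex_of_real (2*pi) * c k else 0)"
      by (subst sum.delta) (auto simp: abs_le_iff mult.commute)
    finally show ?thesis .
  qed
  have h3: "(\<lambda>x. tp M c x * cis (- (of_int k * x))) = (\<lambda>x. \<Sum>j = - int M..int M. c j * cis (of_int (j - k) * x))"
    by (rule ext) (rule e)
  show ?thesis unfolding h3 h2[symmetric] by (rule h1)
qed

lemma fcoef_tp:
  assumes "\<forall>x. complex_of_real (f x) = tp M c x"
  shows "fcoef f k = (if \<bar>k\<bar> \<le> int M then c k else 0)"
proof -
  have "integral {-pi..pi} (\<lambda>x. complex_of_real (f x) * cis (- (of_int k * x)))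
      = (if \<bar>k\<bar> \<le> int M then complex_of_real (2*pi) * c k else 0)"
    using tp_coef[of M c k] assms by (simp add: integral_unique)
  then show ?thesis unfolding fcoef_def by auto
qed

lemma tp_uniq:
  assumes "\<forall>x. tp M c x = tp M d x" "\<bar>k\<bar> \<le> int M"
  shows "c k = d k"
proof -
  have "complex_of_real (2*pi) * c k = complex_of_real (2*pi) * d k"
  proof -
    have fe: "(\<lambda>x. tp M c x * cis (- (of_int k * x))) = (\<lambda>x. tp M d x * cis (- (of_int k * x)))"
      using assms(1) by simp
    have "((\<lambda>x. tp M c x * cis (- (of_int k * x))) has_integral complex_of_real (2*pi) * c k) {-pi..pi}"
      using tp_coef[of M c k] assms(2) by simp
    moreover have "((\<lambda>x. tp M c x * cis (- (of_int k * x))) has_integral complex_of_real (2*pi) * d k) {-pi..pi}"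
      using tp_coef[of M d k] assms(2) unfolding fe by simp
    ultimately show ?thesis by (rule has_integral_unique)
  qed
  then show ?thesis by simp
qed

lemma tp_cnj: "cnj (tp M c x) = tp M (\<lambda>k. cnj (c (- k))) x"
  unfolding tp_def cnj_sum
  by (rule sum.reindex_bij_witness[of _ uminus uminus]) (auto simp: cis_cnj)

definition herm :: "nat \<Rightarrow> (int \<Rightarrow> complex) \<Rightarrow> bool" where
  "herm M c \<longleftrightarrow> (\<forall>k. \<bar>k\<bar> \<le> int M \<longrightarrow> c (- k) = cnj (c k))"

definition supp :: "nat \<Rightarrow> (int \<Rightarrow> complex) \<Rightarrow> bool" where
  "supp M c \<longleftrightarrow> (\<forall>k. int M < \<bar>k\<bar> \<longrightarrow> c k = 0)"

definition cv :: "nat \<Rightarrow> (int \<Rightarrow> complex) \<Rightarrow> (int \<Rightarrow> complex) \<Rightarrow> int \<Rightarrow> complex" where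
  "cv M c d k = (\<Sum>j = - int M..int M. c j * d (k - j))"

lemma real_herm:
  assumes "\<forall>x. complex_of_real (f x) = tp M c x"
  shows "herm M c"
proof -
  have "\<forall>x. tp M c x = tp M (\<lambda>k. cnj (c (- k))) x"
  proof
    fix x
    have "tp M c x = cnj (complex_of_real (f x))" using assms by (metis complex_cnj_complex_of_real)
    also have "\<dots> = tp M (\<lambda>k. cnj (c (- k))) x" using assms tp_cnj by metis
    finally show "tp M c x = tp M (\<lambda>k. cnj (c (- k))) x" .
  qed
  then have "c (- k) = cnj (c (- (- k)))" if "\<bar>k\<bar> \<le> int M" for k
    using tp_uniq[of M c "\<lambda>k. cnj (c (- k))" "- k"] that by simp
  then show ?thesis unfolding herm_def by simp
qed

lemma herm_real:
  assumes "herm M c"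
  shows "complex_of_real (Re (tp M c x)) = tp M c x"
proof -
  have "tp M (\<lambda>k. cnj (c (- k))) x = tp M c x"
    unfolding tp_def
  proof (intro sum.cong refl)
    fix k assume "k \<in> {- int M..int M}"
    then have "c (- k) = cnj (c k)" using assms unfolding herm_def by auto
    then show "cnj (c (- k)) * cis (of_int k * x) = c k * cis (of_int k * x)" by simp
  qed
  then have "cnj (tp M c x) = tp M c x" by (simp add: tp_cnj)
  then have "Im (tp M c x) = 0" by (metis cnj.simps(2) complex_cnj_cancel_iff neg_equal_zero)
  then show ?thesis by (simp add: complex_eq_iff)
qed

lemma tp_vd:
  "(tp M c has_vector_derivative tp M (\<lambda>k. \<i> * of_int k * c k) x) (at x within S)"
proof -
  have "((\<lambda>x. \<Sum>k = - int M..int M. c k * cis (of_int k * x)) has_vector_derivative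
        (\<Sum>k = - int M..int M. c k * (\<i> * of_int k * cis (of_int k * x)))) (at x within S)"
    by (intro has_vector_derivative_sum has_vector_derivative_mult_right cis_vd)
  moreover have "(\<Sum>k = - int M..int M. c k * (\<i> * of_int k * cis (of_int k * x))) = tp M (\<lambda>k. \<i> * of_int k * c k) x"
    unfolding tp_def by (intro sum.cong refl) (simp add: algebra_simps)
  ultimately show ?thesis unfolding tp_def[abs_def] by simp
qed

lemma herm_deriv: "herm M c \<Longrightarrow> herm M (\<lambda>k. \<i> * of_int k * c k)"
  unfolding herm_def by auto

lemma deriv_tp:
  assumes "\<forall>x. complex_of_real (f x) = tp M c x"
  shows "\<forall>x. complex_of_real (deriv f x) = tp M (\<lambda>k. \<i> * of_int k * c k) x"
proof
  fix x
  have fe: "f = (\<lambda>x. Re (tp M c x))"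
    using assms by (metis Re_complex_of_real)
  have "((\<lambda>x. Re (tp M c x)) has_vector_derivative Re (tp M (\<lambda>k. \<i> * of_int k * c k) x)) (at x)"
    using bounded_linear.has_vector_derivative[OF bounded_linear_Re tp_vd] .
  then have "(f has_real_derivative Re (tp M (\<lambda>k. \<i> * of_int k * c k) x)) (at x)"
    using fe has_real_derivative_iff_has_vector_derivative by metis
  then have "deriv f x = Re (tp M (\<lambda>k. \<i> * of_int k * c k) x)"
    by (rule DERIV_imp_deriv)
  then show "complex_of_real (deriv f x) = tp M (\<lambda>k. \<i> * of_int k * c k) x"
    using herm_real[OF herm_deriv[OF real_herm[OF assms]]] by simp
qed

lemma cont_tp: "continuous_on A (tp M c)"
  unfolding tp_def[abs_def] by (intro continuous_intros)

lemma cont_real_tp: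
  assumes "\<forall>x. complex_of_real (f x) = tp M c x"
  shows "continuous_on A f"
proof -
  have fe: "f = (\<lambda>x. Re (tp M c x))"
    using assms by (metis Re_complex_of_real)
  show ?thesis unfolding fe by (intro continuous_intros cont_tp)
qed

lemma tp_add: "tp M (\<lambda>k. c k + d k) x = tp M c x + tp M d x"
  unfolding tp_def by (simp add: sum.distrib distrib_right)

lemma tp_scale: "tp M (\<lambda>k. r * c k) x = r * tp M c x"
  unfolding tp_def by (simp add: sum_distrib_left mult.assoc)

lemma tp_mult:
  assumes "supp M d"
  shows "tp M c x * tp M d x = tp (2*M) (cv M c d) x"
proof -
  have inner: "(\<Sum>k = - int (2*M)..int (2*M). d (k - j) * cis (of_int k * x))
       = (\<Sum>m = - int M..int M. d m * cis (of_int (m + j) * x))" if j: "j \<in> {- int M..int M}" for j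
  proof -
    have "(\<Sum>k = - int (2*M)..int (2*M). d (k - j) * cis (of_int k * x))
        = (\<Sum>k = j - int M..j + int M. d (k - j) * cis (of_int k * x))"
    proof (rule sum.mono_neutral_right)
      show "{j - int M..j + int M} \<subseteq> {- int (2 * M)..int (2 * M)}" using j by auto
      show "\<forall>i\<in>{- int (2 * M)..int (2 * M)} - {j - int M..j + int M}. d (i - j) * cis (of_int i * x) = 0"
        using assms unfolding supp_def by auto
    qed auto
    also have "\<dots> = (\<Sum>m = - int M..int M. d m * cis (of_int (m + j) * x))"
      by (rule sum.reindex_bij_witness[of _ "\<lambda>m. m + j" "\<lambda>k. k - j"]) auto
    finally show ?thesis .
  qed
  have "tp (2*M) (cv M c d) x = (\<Sum>k = - int (2*M)..int (2*M). \<Sum>j = - int M..int M. c j * d (k - j) * cis (of_int k * x))"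
    unfolding tp_def cv_def by (simp add: sum_distrib_right)
  also have "\<dots> = (\<Sum>j = - int M..int M. c j * (\<Sum>k = - int (2*M)..int (2*M). d (k - j) * cis (of_int k * x)))"
    by (subst sum.swap) (simp add: sum_distrib_left mult.assoc)
  also have "\<dots> = (\<Sum>j = - int M..int M. c j * (\<Sum>m = - int M..int M. d m * cis (of_int (m + j) * x)))"
  proof (intro sum.cong refl)
    fix j assume "j \<in> {- int M..int M}"
    from inner[OF this] show "c j * (\<Sum>k = - int (2*M)..int (2*M). d (k - j) * cis (of_int k * x)) =
         c j * (\<Sum>m = - int M..int M. d m * cis (of_int (m + j) * x))" by (rule arg_cong)
  qed
  also have "\<dots> = tp M c x * tp M d x"
    unfolding tp_def sum_product
    by (intro sum.cong refl) (simp add: sum_distrib_left cis_mult algebra_simps)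
  finally show ?thesis by simp
qed

lemma fcoef_l2:
  assumes g: "continuous_on {-pi..pi} g"
  shows "complex_of_real (2*pi) * fcoef g k
     = complex_of_real (l2inner g (\<lambda>x. cos (of_int k * x))) - \<i> * complex_of_real (l2inner g (\<lambda>x. sin (of_int k * x)))"
proof -
  have i1: "((\<lambda>x. g x * cos (of_int k * x)) has_integral l2inner g (\<lambda>x. cos (of_int k * x))) {-pi..pi}"
    unfolding l2inner_def
    by (intro integrable_integral integrable_continuous_interval continuous_intros g)
  have i2: "((\<lambda>x. g x * sin (of_int k * x)) has_integral l2inner g (\<lambda>x. sin (of_int k * x))) {-pi..pi}"
    unfolding l2inner_def
    by (intro integrable_integral integrable_continuous_interval continuous_intros g)
  have "((\<lambda>x. complex_of_real (g x * cos (of_int k * x)) - \<i> * complex_of_real (g x * sin (of_int k * x))) has_integral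
      (complex_of_real (l2inner g (\<lambda>x. cos (of_int k * x))) - \<i> * complex_of_real (l2inner g (\<lambda>x. sin (of_int k * x))))) {-pi..pi}"
    by (intro has_integral_diff has_integral_mult_right has_integral_of_real i1 i2)
  moreover have "(\<lambda>x. complex_of_real (g x * cos (of_int k * x)) - \<i> * complex_of_real (g x * sin (of_int k * x)))
     = (\<lambda>x. complex_of_real (g x) * cis (- (of_int k * x)))"
  proof
    fix x
    have e: "complex_of_real a * cis (- t) = complex_of_real (a * cos t) - \<i> * complex_of_real (a * sin t)" for a t
      by (simp add: complex_eq_iff)
    show "complex_of_real (g x * cos (of_int k * x)) - \<i> * complex_of_real (g x * sin (of_int k * x))
     = complex_of_real (g x) * cis (- (of_int k * x))" by (rule e[symmetric])
  qed
  ultimately have "integral {-pi..pi} (\<lambda>x. complex_of_real (g x) * cis (- (of_int k * x)))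
     = complex_of_real (l2inner g (\<lambda>x. cos (of_int k * x))) - \<i> * complex_of_real (l2inner g (\<lambda>x. sin (of_int k * x)))"
    by (simp add: integral_unique)
  then show ?thesis unfolding fcoef_def by simp
qed

lemma l2_tp:
  assumes g: "continuous_on {-pi..pi} g" and phi: "\<forall>x. complex_of_real (\<phi> x) = tp N d x"
  shows "complex_of_real (l2inner g \<phi>) = complex_of_real (2*pi) * (\<Sum>j = - int N..int N. d j * fcoef g (- j))"
proof -
  have cphi: "continuous_on {-pi..pi} \<phi>" using cont_real_tp[OF phi] .
  have i0: "((\<lambda>x. g x * \<phi> x) has_integral l2inner g \<phi>) {-pi..pi}"
    unfolding l2inner_def
    by (intro integrable_integral integrable_continuous_interval continuous_intros g cphi)
  have ij: "((\<lambda>x. complex_of_real (g x) * cis (- (of_int (- j) * x))) has_integral complex_of_real (2*pi) * fcoef g (- j)) {-pi..pi}" for j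
  proof -
    have "(\<lambda>x. complex_of_real (g x) * cis (- (of_int (- j) * x))) integrable_on {-pi..pi}"
      by (intro integrable_continuous_interval continuous_intros g)
    then show ?thesis unfolding fcoef_def by (simp add: integrable_integral)
  qed
  have "((\<lambda>x. \<Sum>j = - int N..int N. d j * (complex_of_real (g x) * cis (- (of_int (- j) * x)))) has_integral
        (\<Sum>j = - int N..int N. d j * (complex_of_real (2*pi) * fcoef g (- j)))) {-pi..pi}"
    by (intro has_integral_sum finite_atLeastAtMost_int has_integral_mult_right ij)
  moreover have "(\<lambda>x. \<Sum>j = - int N..int N. d j * (complex_of_real (g x) * cis (- (of_int (- j) * x))))
      = (\<lambda>x. complex_of_real (g x * \<phi> x))"
  proof
    fix x
    have "complex_of_real (g x * \<phi> x) = complex_of_real (g x) * tp N d x" using phi by simp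
    also have "\<dots> = (\<Sum>j = - int N..int N. d j * (complex_of_real (g x) * cis (- (of_int (- j) * x))))"
      unfolding tp_def sum_distrib_left by (intro sum.cong refl) (simp add: algebra_simps)
    finally show "(\<Sum>j = - int N..int N. d j * (complex_of_real (g x) * cis (- (of_int (- j) * x)))) = complex_of_real (g x * \<phi> x)" by simp
  qed
  ultimately have "((\<lambda>x. complex_of_real (g x * \<phi> x)) has_integral
        (\<Sum>j = - int N..int N. d j * (complex_of_real (2*pi) * fcoef g (- j)))) {-pi..pi}" by simp
  moreover have "((\<lambda>x. complex_of_real (g x * \<phi> x)) has_integral complex_of_real (l2inner g \<phi>)) {-pi..pi}"
    using has_integral_of_real[OF i0] .
  ultimately have "complex_of_real (l2inner g \<phi>) = (\<Sum>j = - int N..int N. d j * (complex_of_real (2*pi) * fcoef g (- j)))"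
    using has_integral_unique by blast
  then show ?thesis by (simp add: sum_distrib_left algebra_simps)
qed

lemma VN_tp:
  assumes "f \<in> VN N"
  shows "\<forall>x. complex_of_real (f x) = tp N (fcoef f) x" "supp N (fcoef f)"
proof -
  obtain c where c: "\<forall>x. complex_of_real (f x) = (\<Sum>k = - int N..int N. c k * cis (of_int k * x))"
    using assms unfolding VN_def by auto
  then have c': "\<forall>x. complex_of_real (f x) = tp N c x" unfolding tp_def by simp
  have fc: "fcoef f k = (if \<bar>k\<bar> \<le> int N then c k else 0)" for k using fcoef_tp[OF c'] .
  show "supp N (fcoef f)" unfolding supp_def fc by auto
  show "\<forall>x. complex_of_real (f x) = tp N (fcoef f) x"
    using c' unfolding tp_def fc by (auto intro!: sum.cong)
qed

lemma tp_VN: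
  assumes "\<forall>x. complex_of_real (f x) = tp N c x"
  shows "f \<in> VN N"
  using assms unfolding VN_def tp_def by auto

lemma sob_tp:
  assumes "\<forall>x. complex_of_real (f x) = tp N c x"
  shows "sob_norm r f = sqrt (\<Sum>k = - int N..int N. (1 + (of_int k)\<^sup>2) powr r * (cmod (c k))\<^sup>2)"
proof -
  have "infsum (\<lambda>k::int. (1 + (of_int k)\<^sup>2) powr r * (cmod (fcoef f k))\<^sup>2) UNIV
      = infsum (\<lambda>k::int. (1 + (of_int k)\<^sup>2) powr r * (cmod (c k))\<^sup>2) {- int N..int N}"
    by (rule infsum_cong_neutral) (auto simp: fcoef_tp[OF assms])
  then show ?thesis unfolding sob_norm_def by simp
qed

lemma fracD_tp:
  assumes "\<forall>x. complex_of_real (f x) = tp N c x"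
  shows "\<forall>x. complex_of_real (fracD \<alpha> f x) = tp N (\<lambda>k. complex_of_real (\<bar>of_int k\<bar> powr \<alpha>) * c k) x"
proof
  fix x
  have "infsum (\<lambda>k::int. complex_of_real (\<bar>of_int k\<bar> powr \<alpha>) * fcoef f k * cis (of_int k * x)) UNIV
      = infsum (\<lambda>k::int. complex_of_real (\<bar>of_int k\<bar> powr \<alpha>) * c k * cis (of_int k * x)) {- int N..int N}"
    by (rule infsum_cong_neutral) (auto simp: fcoef_tp[OF assms])
  also have "\<dots> = tp N (\<lambda>k. complex_of_real (\<bar>of_int k\<bar> powr \<alpha>) * c k) x"
    unfolding tp_def by simp
  finally have e: "fracD \<alpha> f x = Re (tp N (\<lambda>k. complex_of_real (\<bar>of_int k\<bar> powr \<alpha>) * c k) x)"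
    unfolding fracD_def by simp
  have "herm N (\<lambda>k. complex_of_real (\<bar>of_int k\<bar> powr \<alpha>) * c k)"
    using real_herm[OF assms] unfolding herm_def by auto
  from herm_real[OF this] show "complex_of_real (fracD \<alpha> f x) = tp N (\<lambda>k. complex_of_real (\<bar>of_int k\<bar> powr \<alpha>) * c k) x"
    unfolding e .
qed

definition wt :: "real \<Rightarrow> int \<Rightarrow> real" where
  "wt s k = (1 + (of_int k)\<^sup>2) powr s"

lemma wt_pos: "0 < wt s k"
proof -
  have "0 < 1 + (of_int k :: real)\<^sup>2" by (simp add: add_pos_nonneg)
  then show ?thesis unfolding wt_def by simp
qed

lemma rho_bound:
  fixes j m :: int and s :: real
  assumes s: "2 \<le> s" "s \<le> 3"
  shows "wt s (j + m) / (wt s j * wt s m) \<le> 16 * (1 / (1 + (of_int j)\<^sup>2)\<^sup>2 + 1 / (1 + (of_int m)\<^sup>2)\<^sup>2)"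
proof -
  define P where "P = (1 + (of_int (j + m))\<^sup>2 :: real)"
  define X where "X = (1 + (of_int j)\<^sup>2 :: real)"
  define Y where "Y = (1 + (of_int m)\<^sup>2 :: real)"
  have X1: "1 \<le> X" and Y1: "1 \<le> Y" and P1: "1 \<le> P" unfolding X_def Y_def P_def by auto
  define r where "r = P / (X * Y)"
  have r0: "0 < r" unfolding r_def using X1 Y1 P1 by auto
  have e: "wt s (j + m) / (wt s j * wt s m) = r powr s"
    unfolding wt_def r_def P_def X_def Y_def by (simp add: powr_divide powr_mult add_pos_nonneg)
  have Pjm: "(of_int j + of_int m)\<^sup>2 \<le> 2 * (of_int j)\<^sup>2 + 2 * (of_int m :: real)\<^sup>2"
  proof -
    have "0 \<le> (of_int j - of_int m :: real)\<^sup>2" by simp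
    then show ?thesis by (simp add: power2_eq_square algebra_simps)
  qed
  have "P \<le> 2 * (X * Y)"
  proof -
    have h0: "0 \<le> (of_int j)\<^sup>2 * (of_int m :: real)\<^sup>2" by simp
    have h1: "2 * (X * Y) = 2 + 2 * (of_int j)\<^sup>2 + 2 * (of_int m)\<^sup>2 + 2 * ((of_int j)\<^sup>2 * (of_int m)\<^sup>2)"
      by (simp add: X_def Y_def algebra_simps)
    have h2: "P = 1 + (of_int j + of_int m)\<^sup>2" by (simp add: P_def)
    show ?thesis using h0 h1 h2 Pjm by linarith
  qed
  then have r2: "r \<le> 2" unfolding r_def using X1 Y1 by (simp add: divide_le_eq mult.commute)
  have rs: "r powr s \<le> 2 * r\<^sup>2"
  proof (cases "1 \<le> r")
    case True
    then have "r powr s \<le> r powr 3" using s by (intro powr_mono) auto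
    also have "\<dots> = r ^ 3" using r0 by simp
    also have "\<dots> \<le> 2 * r\<^sup>2" using r2 r0 by (simp add: power3_eq_cube power2_eq_square)
    finally show ?thesis .
  next
    case False
    then have "r powr s \<le> r powr 2" using s r0 by (intro powr_mono') auto
    also have "\<dots> = r\<^sup>2" using r0 by simp
    finally have "r powr s \<le> r\<^sup>2" .
    moreover have "0 \<le> r\<^sup>2" by simp
    ultimately show ?thesis by linarith
  qed
  have rb: "r \<le> 2 / X + 2 / Y"
  proof -
    have "P \<le> 2 * X + 2 * Y" unfolding P_def X_def Y_def using Pjm by simp
    then have "P / (X * Y) \<le> (2 * X + 2 * Y) / (X * Y)" using X1 Y1 by (intro divide_right_mono) auto
    also have "\<dots> = 2 / Y + 2 / X" using X1 Y1 by (simp add: field_simps)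
    finally show ?thesis unfolding r_def by simp
  qed
  have "r\<^sup>2 \<le> (2 / X + 2 / Y)\<^sup>2" using r0 rb by (intro power_mono) auto
  also have "\<dots> \<le> 8 * (1 / X\<^sup>2 + 1 / Y\<^sup>2)"
  proof -
    have "0 \<le> (1/X - 1/Y)\<^sup>2" by simp
    then show ?thesis by (simp add: power2_eq_square algebra_simps)
  qed
  finally have "r\<^sup>2 \<le> 8 * (1 / X\<^sup>2 + 1 / Y\<^sup>2)" .
  then show ?thesis using e rs unfolding X_def Y_def by linarith
qed

lemma Rsuc: "{- int (Suc N)..int (Suc N)} = insert (int N + 1) (insert (- (int N + 1)) {- int N..int N})"
  by auto

lemma T2_aux: "(\<Sum>k = - int N..int N. 1 / (1 + (of_int k)\<^sup>2)\<^sup>2 :: real) \<le> 2 - 2 / ((real N + 1) * (real N + 2))"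
proof (induction N)
  case 0
  then show ?case by simp
next
  case (Suc N)
  have "(\<Sum>k = - int (Suc N)..int (Suc N). 1 / (1 + (of_int k)\<^sup>2)\<^sup>2 :: real)
      = 2 / (1 + (real N + 1)\<^sup>2)\<^sup>2 + (\<Sum>k = - int N..int N. 1 / (1 + (of_int k)\<^sup>2)\<^sup>2)"
  proof -
    have "(- real N - 1)\<^sup>2 = (real N + 1)\<^sup>2" by (simp add: power2_eq_square algebra_simps)
    then show ?thesis unfolding Rsuc by (simp add: add_pos_nonneg)
  qed
  also have "\<dots> \<le> 2 / (1 + (real N + 1)\<^sup>2)\<^sup>2 + (2 - 2 / ((real N + 1) * (real N + 2)))"
    using Suc.IH by simp
  also have "\<dots> \<le> 2 - 2 / ((real (Suc N) + 1) * (real (Suc N) + 2))"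
  proof -
    define n where "n = real N"
    have n0: "0 \<le> n" unfolding n_def by simp
    have key: "2 / (1 + (n + 1)\<^sup>2)\<^sup>2 \<le> 4 / ((n + 1) * (n + 2) * (n + 3))"
    proof -
      have "(n + 1) * (n + 2) * (n + 3) * 2 \<le> 4 * (1 + (n + 1)\<^sup>2)\<^sup>2"
        using n0 by (simp add: power2_eq_square algebra_simps)
      then show ?thesis using n0 by (simp add: divide_simps add_pos_nonneg)
    qed
    have "4 / ((n + 1) * (n + 2) * (n + 3)) = 2 / ((n + 1) * (n + 2)) - 2 / ((n + 2) * (n + 3))"
    proof -
      have "0 < n + 1" "0 < n + 2" "0 < n + 3" using n0 by auto
      then show ?thesis by (simp add: divide_simps)
    qed
    then show ?thesis using key unfolding n_def by (simp add: algebra_simps)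
  qed
  finally show ?case .
qed

lemma T2: "(\<Sum>k = - int N..int N. 1 / (1 + (of_int k)\<^sup>2)\<^sup>2 :: real) \<le> 2"
proof -
  have "0 \<le> 2 / ((real N + 1) * (real N + 2))" by simp
  then show ?thesis using T2_aux[of N] by linarith
qed

lemma shift_le:
  fixes f :: "int \<Rightarrow> real"
  assumes f0: "\<And>m. 0 \<le> f m" and fz: "\<And>m. m \<notin> {- int N..int N} \<Longrightarrow> f m = 0"
    and inj: "inj_on h {- int N..int N}"
  shows "(\<Sum>x\<in>{- int N..int N}. f (h x)) \<le> (\<Sum>m\<in>{- int N..int N}. f m)"
proof -
  have "(\<Sum>x\<in>{- int N..int N}. f (h x)) = (\<Sum>m\<in>h ` {- int N..int N}. f m)"
    using sum.reindex[OF inj, of f] by simp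
  also have "\<dots> = (\<Sum>m\<in>h ` {- int N..int N} \<inter> {- int N..int N}. f m)"
    by (rule sum.mono_neutral_right) (use fz in auto)
  also have "\<dots> \<le> (\<Sum>m\<in>{- int N..int N}. f m)"
    by (rule sum_mono2) (use f0 in auto)
  finally show ?thesis .
qed

lemma shift1:
  fixes f :: "int \<Rightarrow> real"
  assumes "\<And>m. 0 \<le> f m" "\<And>m. m \<notin> {- int N..int N} \<Longrightarrow> f m = 0"
  shows "(\<Sum>x\<in>{- int N..int N}. f (x - j)) \<le> (\<Sum>m\<in>{- int N..int N}. f m)"
  using shift_le[of f N "\<lambda>x. x - j"] assms by (simp add: inj_on_def)

lemma shift2:
  fixes f :: "int \<Rightarrow> real"
  assumes "\<And>m. 0 \<le> f m" "\<And>m. m \<notin> {- int N..int N} \<Longrightarrow> f m = 0"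
  shows "(\<Sum>x\<in>{- int N..int N}. f (k - x)) \<le> (\<Sum>m\<in>{- int N..int N}. f m)"
  using shift_le[of f N "\<lambda>x. k - x"] assms by (simp add: inj_on_def)

lemma supp_z: "supp N g \<Longrightarrow> m \<notin> {- int N..int N} \<Longrightarrow> g m = 0"
  unfolding supp_def by auto

lemma young:
  fixes u g :: "int \<Rightarrow> complex"
  assumes g: "supp N g"
  shows "(\<Sum>k\<in>{- int N..int N}. (cmod (\<Sum>j\<in>{- int N..int N}. u j * g (k - j)))\<^sup>2)
      \<le> (\<Sum>m\<in>{- int N..int N}. cmod (g m))\<^sup>2 * (\<Sum>j\<in>{- int N..int N}. (cmod (u j))\<^sup>2)"
proof -
  define R where "R = {- int N..int N}"
  define G where "G = (\<Sum>m\<in>R. cmod (g m))"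
  have gz: "\<And>m. m \<notin> R \<Longrightarrow> cmod (g m) = 0" using supp_z[OF g] unfolding R_def by auto
  have sh2: "(\<Sum>j\<in>R. cmod (g (k - j))) \<le> G" for k
    unfolding G_def R_def by (rule shift2[of "\<lambda>m. cmod (g m)"]) (use gz R_def in auto)
  have sh1: "(\<Sum>k\<in>R. cmod (g (k - j))) \<le> G" for j
    unfolding G_def R_def by (rule shift1[of "\<lambda>m. cmod (g m)"]) (use gz R_def in auto)
  have G0: "0 \<le> G" unfolding G_def by (simp add: sum_nonneg)
  have pk: "(cmod (\<Sum>j\<in>R. u j * g (k - j)))\<^sup>2 \<le> G * (\<Sum>j\<in>R. (cmod (u j))\<^sup>2 * cmod (g (k - j)))" for k
  proof -
    have "cmod (\<Sum>j\<in>R. u j * g (k - j)) \<le> (\<Sum>j\<in>R. cmod (u j) * cmod (g (k - j)))"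
      by (rule order_trans[OF norm_sum]) (simp add: norm_mult)
    also have "\<dots> = (\<Sum>j\<in>R. (cmod (u j) * sqrt (cmod (g (k - j)))) * sqrt (cmod (g (k - j))))"
      by (simp add: mult.assoc)
    finally have h: "cmod (\<Sum>j\<in>R. u j * g (k - j)) \<le> (\<Sum>j\<in>R. (cmod (u j) * sqrt (cmod (g (k - j)))) * sqrt (cmod (g (k - j))))" .
    have "(cmod (\<Sum>j\<in>R. u j * g (k - j)))\<^sup>2 \<le> (\<Sum>j\<in>R. (cmod (u j) * sqrt (cmod (g (k - j)))) * sqrt (cmod (g (k - j))))\<^sup>2"
      using h by (intro power_mono) auto
    also have "\<dots> \<le> (\<Sum>j\<in>R. (cmod (u j) * sqrt (cmod (g (k - j))))\<^sup>2) * (\<Sum>j\<in>R. (sqrt (cmod (g (k - j))))\<^sup>2)"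
      by (rule Cauchy_Schwarz_ineq_sum)
    also have "\<dots> = (\<Sum>j\<in>R. (cmod (u j))\<^sup>2 * cmod (g (k - j))) * (\<Sum>j\<in>R. cmod (g (k - j)))"
      by (simp add: power_mult_distrib)
    also have "\<dots> \<le> (\<Sum>j\<in>R. (cmod (u j))\<^sup>2 * cmod (g (k - j))) * G"
      by (intro mult_left_mono sh2 sum_nonneg) auto
    finally show ?thesis by (simp add: mult.commute)
  qed
  have "(\<Sum>k\<in>R. (cmod (\<Sum>j\<in>R. u j * g (k - j)))\<^sup>2) \<le> (\<Sum>k\<in>R. G * (\<Sum>j\<in>R. (cmod (u j))\<^sup>2 * cmod (g (k - j))))"
    by (intro sum_mono pk)
  also have "\<dots> = G * (\<Sum>k\<in>R. \<Sum>j\<in>R. (cmod (u j))\<^sup>2 * cmod (g (k - j)))"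
    by (simp add: sum_distrib_left)
  also have "\<dots> = G * (\<Sum>j\<in>R. \<Sum>k\<in>R. (cmod (u j))\<^sup>2 * cmod (g (k - j)))"
    by (subst sum.swap) (rule refl)
  also have "\<dots> = G * (\<Sum>j\<in>R. (cmod (u j))\<^sup>2 * (\<Sum>k\<in>R. cmod (g (k - j))))"
    by (simp add: sum_distrib_left)
  also have "\<dots> \<le> G * (\<Sum>j\<in>R. (cmod (u j))\<^sup>2 * G)"
    by (intro mult_left_mono sum_mono G0 sh1) auto
  also have "\<dots> = G\<^sup>2 * (\<Sum>j\<in>R. (cmod (u j))\<^sup>2)"
  proof -
    have "(\<Sum>j\<in>R. (cmod (u j))\<^sup>2 * G) = (\<Sum>j\<in>R. (cmod (u j))\<^sup>2) * G"
      by (rule sum_distrib_right[symmetric])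
    then show ?thesis by (simp add: power2_eq_square)
  qed
  finally show ?thesis unfolding R_def G_def .
qed

lemma l1_bound:
  fixes g :: "int \<Rightarrow> complex"
  assumes s: "2 \<le> s"
  shows "(\<Sum>m\<in>{- int N..int N}. cmod (g m))\<^sup>2 \<le> 2 * (\<Sum>m\<in>{- int N..int N}. wt s m * (cmod (g m))\<^sup>2)"
proof -
  define R where "R = {- int N..int N}"
  have w: "1 / wt s m \<le> 1 / (1 + (of_int m)\<^sup>2)\<^sup>2" for m
  proof -
    have b: "1 \<le> 1 + (of_int m :: real)\<^sup>2" by simp
    have "(1 + (of_int m :: real)\<^sup>2)\<^sup>2 = (1 + (of_int m)\<^sup>2) powr 2" using b by simp
    also have "\<dots> \<le> wt s m" unfolding wt_def using b s by (intro powr_mono) auto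
    finally have c1: "(1 + (of_int m :: real)\<^sup>2)\<^sup>2 \<le> wt s m" .
    have b': "0 < 1 + (of_int m :: real)\<^sup>2" by (intro add_pos_nonneg) auto
    have "0 < (1 + (of_int m :: real)\<^sup>2)\<^sup>2" using b' by simp
    then show ?thesis using wt_pos[of s m] by (intro divide_left_mono c1) (auto intro: mult_pos_pos)
  qed
  have "(\<Sum>m\<in>R. cmod (g m)) = (\<Sum>m\<in>R. (1 / sqrt (wt s m)) * (sqrt (wt s m) * cmod (g m)))"
  proof (intro sum.cong refl)
    fix m
    have "0 < wt s m" by (rule wt_pos)
    then show "cmod (g m) = 1 / sqrt (wt s m) * (sqrt (wt s m) * cmod (g m))" by simp
  qed
  then have "(\<Sum>m\<in>R. cmod (g m))\<^sup>2 \<le> (\<Sum>m\<in>R. (1 / sqrt (wt s m))\<^sup>2) * (\<Sum>m\<in>R. (sqrt (wt s m) * cmod (g m))\<^sup>2)"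
    using Cauchy_Schwarz_ineq_sum by metis
  also have "\<dots> = (\<Sum>m\<in>R. 1 / wt s m) * (\<Sum>m\<in>R. wt s m * (cmod (g m))\<^sup>2)"
    using wt_pos by (simp add: power_mult_distrib power_divide less_imp_le)
  also have "\<dots> \<le> 2 * (\<Sum>m\<in>R. wt s m * (cmod (g m))\<^sup>2)"
  proof (rule mult_right_mono)
    have "(\<Sum>m\<in>R. 1 / wt s m) \<le> (\<Sum>m\<in>R. 1 / (1 + (of_int m)\<^sup>2)\<^sup>2)" by (intro sum_mono w)
    also have "\<dots> \<le> 2" unfolding R_def by (rule T2)
    finally show "(\<Sum>m\<in>R. 1 / wt s m) \<le> 2" .
  next
    show "0 \<le> (\<Sum>m\<in>R. wt s m * (cmod (g m))\<^sup>2)"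
      by (intro sum_nonneg mult_nonneg_nonneg less_imp_le[OF wt_pos]) auto
  qed
  finally show ?thesis unfolding R_def .
qed

lemma alg:
  fixes a b :: "int \<Rightarrow> complex"
  assumes a: "supp N a" and b: "supp N b" and s: "2 \<le> s" "s \<le> 3"
  shows "(\<Sum>k\<in>{- int N..int N}. wt s k * (cmod (\<Sum>j\<in>{- int N..int N}. a j * b (k - j)))\<^sup>2)
      \<le> 64 * (\<Sum>k\<in>{- int N..int N}. wt s k * (cmod (a k))\<^sup>2) * (\<Sum>k\<in>{- int N..int N}. wt s k * (cmod (b k))\<^sup>2)"
proof -
  define R where "R = {- int N..int N}"
  define A where "A j = sqrt (wt s j) * cmod (a j)" for j
  define B where "B j = sqrt (wt s j) * cmod (b j)" for j
  define x where "x m = (if m \<in> R then 1 / (1 + (of_int m)\<^sup>2)\<^sup>2 else 0 :: real)" for m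
  define rho where "rho k j = (if k - j \<in> R then sqrt (wt s k / (wt s j * wt s (k - j))) else 0)" for k j
  have wp: "\<And>k. 0 < wt s k" by (rule wt_pos)
  have bz: "m \<notin> R \<Longrightarrow> b m = 0" for m using supp_z[OF b] R_def by auto
  have A2: "(A j)\<^sup>2 = wt s j * (cmod (a j))\<^sup>2" for j
    unfolding A_def using wp[of j] by (simp add: power_mult_distrib)
  have B2: "(B j)\<^sup>2 = wt s j * (cmod (b j))\<^sup>2" for j
    unfolding B_def using wp[of j] by (simp add: power_mult_distrib)
  have x0: "0 \<le> x m" for m unfolding x_def by simp
  have xsum: "(\<Sum>m\<in>R. x m) \<le> 2"
  proof -
    have "(\<Sum>m\<in>R. x m) = (\<Sum>m\<in>R. 1 / (1 + (of_int m)\<^sup>2)\<^sup>2)" unfolding x_def by simp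
    also have "\<dots> \<le> 2" unfolding R_def by (rule T2)
    finally show ?thesis .
  qed
  have rhosum: "(\<Sum>j\<in>R. (rho k j)\<^sup>2) \<le> 64" for k
  proof -
    have "(rho k j)\<^sup>2 \<le> 16 * (x j + x (k - j))" if j: "j \<in> R" for j
    proof (cases "k - j \<in> R")
      case True
      have "(rho k j)\<^sup>2 = wt s (j + (k - j)) / (wt s j * wt s (k - j))"
        unfolding rho_def using True wp by (simp add: less_imp_le)
      also have "\<dots> \<le> 16 * (1 / (1 + (of_int j)\<^sup>2)\<^sup>2 + 1 / (1 + (of_int (k - j))\<^sup>2)\<^sup>2)"
        by (rule rho_bound[OF s])
      also have "\<dots> = 16 * (x j + x (k - j))" unfolding x_def using True j by simp
      finally show ?thesis .
    next
      case False
      then show ?thesis unfolding rho_def using x0 by simp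
    qed
    then have "(\<Sum>j\<in>R. (rho k j)\<^sup>2) \<le> (\<Sum>j\<in>R. 16 * (x j + x (k - j)))"
      by (intro sum_mono) auto
    also have "\<dots> = 16 * ((\<Sum>j\<in>R. x j) + (\<Sum>j\<in>R. x (k - j)))"
      by (simp add: sum.distrib sum_distrib_left)
    also have "\<dots> \<le> 16 * (2 + 2)"
    proof -
      have "(\<Sum>j\<in>R. x (k - j)) \<le> (\<Sum>m\<in>R. x m)"
        unfolding R_def by (rule shift2) (use x0 x_def R_def in auto)
      then show ?thesis using xsum by simp
    qed
    finally show ?thesis by simp
  qed
  have pk: "wt s k * (cmod (\<Sum>j\<in>R. a j * b (k - j)))\<^sup>2 \<le> 64 * (\<Sum>j\<in>R. (A j)\<^sup>2 * (B (k - j))\<^sup>2)" for k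
  proof -
    have t: "sqrt (wt s k) * (cmod (a j) * cmod (b (k - j))) = A j * B (k - j) * rho k j" for j
    proof (cases "k - j \<in> R")
      case True
      have "sqrt (wt s k) = sqrt (wt s j) * sqrt (wt s (k - j)) * sqrt (wt s k / (wt s j * wt s (k - j)))"
        using wp[of j] wp[of "k - j"] wp[of k] by (simp add: real_sqrt_mult real_sqrt_divide)
      then show ?thesis unfolding A_def B_def rho_def using True by (simp add: algebra_simps)
    next
      case False
      then show ?thesis unfolding A_def B_def rho_def using bz by simp
    qed
    have "sqrt (wt s k) * cmod (\<Sum>j\<in>R. a j * b (k - j)) \<le> sqrt (wt s k) * (\<Sum>j\<in>R. cmod (a j) * cmod (b (k - j)))"
      by (intro mult_left_mono order_trans[OF norm_sum]) (auto simp: norm_mult less_imp_le[OF wp])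
    also have "\<dots> = (\<Sum>j\<in>R. A j * B (k - j) * rho k j)"
      by (simp add: sum_distrib_left t)
    finally have h: "sqrt (wt s k) * cmod (\<Sum>j\<in>R. a j * b (k - j)) \<le> (\<Sum>j\<in>R. (A j * B (k - j)) * rho k j)" .
    have "wt s k * (cmod (\<Sum>j\<in>R. a j * b (k - j)))\<^sup>2 = (sqrt (wt s k) * cmod (\<Sum>j\<in>R. a j * b (k - j)))\<^sup>2"
      using wp[of k] by (simp add: power_mult_distrib)
    also have "\<dots> \<le> (\<Sum>j\<in>R. (A j * B (k - j)) * rho k j)\<^sup>2"
      using h wp[of k] by (intro power_mono) (auto intro!: mult_nonneg_nonneg)
    also have "\<dots> \<le> (\<Sum>j\<in>R. (A j * B (k - j))\<^sup>2) * (\<Sum>j\<in>R. (rho k j)\<^sup>2)"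
      by (rule Cauchy_Schwarz_ineq_sum)
    also have "\<dots> \<le> (\<Sum>j\<in>R. (A j * B (k - j))\<^sup>2) * 64"
      by (intro mult_left_mono rhosum sum_nonneg) auto
    finally show ?thesis by (simp add: power_mult_distrib mult.commute)
  qed
  have Bsh: "(\<Sum>k\<in>R. (B (k - j))\<^sup>2) \<le> (\<Sum>m\<in>R. (B m)\<^sup>2)" for j
    unfolding R_def by (rule shift1) (use bz B_def R_def in auto)
  have "(\<Sum>k\<in>R. wt s k * (cmod (\<Sum>j\<in>R. a j * b (k - j)))\<^sup>2) \<le> (\<Sum>k\<in>R. 64 * (\<Sum>j\<in>R. (A j)\<^sup>2 * (B (k - j))\<^sup>2))"
    by (intro sum_mono pk)
  also have "\<dots> = 64 * (\<Sum>k\<in>R. \<Sum>j\<in>R. (A j)\<^sup>2 * (B (k - j))\<^sup>2)"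
    by (simp add: sum_distrib_left)
  also have "\<dots> = 64 * (\<Sum>j\<in>R. \<Sum>k\<in>R. (A j)\<^sup>2 * (B (k - j))\<^sup>2)"
    by (subst sum.swap) (rule refl)
  also have "\<dots> = 64 * (\<Sum>j\<in>R. (A j)\<^sup>2 * (\<Sum>k\<in>R. (B (k - j))\<^sup>2))"
    by (simp add: sum_distrib_left)
  also have "\<dots> \<le> 64 * (\<Sum>j\<in>R. (A j)\<^sup>2 * (\<Sum>m\<in>R. (B m)\<^sup>2))"
    by (intro mult_left_mono sum_mono Bsh) auto
  also have "\<dots> = 64 * (\<Sum>j\<in>R. (A j)\<^sup>2) * (\<Sum>m\<in>R. (B m)\<^sup>2)"
    by (simp add: sum_distrib_right)
  also have "\<dots> = 64 * (\<Sum>k\<in>R. wt s k * (cmod (a k))\<^sup>2) * (\<Sum>k\<in>R. wt s k * (cmod (b k))\<^sup>2)"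
    by (simp add: A2 B2)
  finally show ?thesis unfolding R_def .
qed

lemma tp_avg: "tp N (\<lambda>j. (c j + d j) / 2) x = (tp N c x + tp N d x) / 2"
  unfolding tp_def by (simp add: sum.distrib sum_divide_distrib[symmetric] algebra_simps add_divide_distrib)

lemma tp_plus: "tp N (\<lambda>j. c j + d j) x = tp N c x + tp N d x"
  by (rule tp_add)

lemma tp_diff: "tp N (\<lambda>j. c j - d j) x = tp N c x - tp N d x"
  unfolding tp_def by (simp add: sum_subtractf left_diff_distrib)

lemma supp_avg: "supp N c \<Longrightarrow> supp N d \<Longrightarrow> supp N (\<lambda>j. (c j + d j) / 2)"
  unfolding supp_def by auto

lemma supp_plus: "supp N c \<Longrightarrow> supp N d \<Longrightarrow> supp N (\<lambda>j. c j + d j)"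
  unfolding supp_def by auto

lemma supp_deriv: "supp N c \<Longrightarrow> supp N (\<lambda>j. \<i> * of_int j * c j)"
  unfolding supp_def by auto

lemma prodfun:
  assumes ha: "\<forall>x. complex_of_real (a x) = tp N ca x" and sa: "supp N ca"
  shows "\<forall>x. complex_of_real (a x * deriv a x) = tp (2*N) (cv N ca (\<lambda>j. \<i> * of_int j * ca j)) x"
proof
  fix x
  have "complex_of_real (a x * deriv a x) = tp N ca x * tp N (\<lambda>j. \<i> * of_int j * ca j) x"
    using ha deriv_tp[OF ha] by simp
  also have "\<dots> = tp (2*N) (cv N ca (\<lambda>j. \<i> * of_int j * ca j)) x"
    by (rule tp_mult[OF supp_deriv[OF sa]])
  finally show "complex_of_real (a x * deriv a x) = tp (2*N) (cv N ca (\<lambda>j. \<i> * of_int j * ca j)) x" .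
qed

lemma Dfun:
  assumes hg: "\<forall>x. complex_of_real (g x) = tp N cg x"
  shows "\<forall>x. complex_of_real (deriv (fracD \<alpha> g) x) = tp N (\<lambda>j. \<i> * of_int j * (complex_of_real (\<bar>of_int j\<bar> powr \<alpha>) * cg j)) x"
  using deriv_tp[OF fracD_tp[OF hg]] .

lemma cos_tp:
  assumes "\<bar>k\<bar> \<le> int N"
  shows "complex_of_real (cos (of_int k * x)) = tp N (\<lambda>j. (if j = k then 1/2 else 0) + (if j = - k then 1/2 else 0)) x"
proof -
  have "tp N (\<lambda>j. (if j = k then 1/2 else 0) + (if j = - k then 1/2 else 0)) x
     = (\<Sum>j = - int N..int N. (if j = k then cis (of_int k * x) / 2 else 0)) + (\<Sum>j = - int N..int N. (if j = - k then cis (of_int (- k) * x) / 2 else 0))"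
    unfolding tp_def sum.distrib[symmetric] by (intro sum.cong refl) auto
  also have "\<dots> = cis (of_int k * x) / 2 + cis (- (of_int k * x)) / 2"
    using assms by (simp add: sum.delta abs_le_iff)
  also have "\<dots> = complex_of_real (cos (of_int k * x))"
    by (simp add: complex_eq_iff)
  finally show ?thesis by simp
qed

lemma sin_tp:
  assumes "\<bar>k\<bar> \<le> int N"
  shows "complex_of_real (sin (of_int k * x)) = tp N (\<lambda>j. (if j = k then - \<i>/2 else 0) + (if j = - k then \<i>/2 else 0)) x"
proof -
  have "tp N (\<lambda>j. (if j = k then - \<i>/2 else 0) + (if j = - k then \<i>/2 else 0)) x
     = (\<Sum>j = - int N..int N. (if j = k then - \<i>/2 * cis (of_int k * x) else 0)) + (\<Sum>j = - int N..int N. (if j = - k then \<i>/2 * cis (of_int (- k) * x) else 0))"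
    unfolding tp_def sum.distrib[symmetric] by (intro sum.cong refl) auto
  also have "\<dots> = - \<i>/2 * cis (of_int k * x) + \<i>/2 * cis (- (of_int k * x))"
    using assms by (simp add: sum.delta abs_le_iff)
  also have "\<dots> = complex_of_real (sin (of_int k * x))"
    by (simp add: complex_eq_iff)
  finally show ?thesis by simp
qed

lemma cos_VN: "\<bar>k\<bar> \<le> int N \<Longrightarrow> (\<lambda>x. cos (of_int k * x)) \<in> VN N"
  using cos_tp by (intro tp_VN) blast

lemma sin_VN: "\<bar>k\<bar> \<le> int N \<Longrightarrow> (\<lambda>x. sin (of_int k * x)) \<in> VN N"
  using sin_tp by (intro tp_VN) blast

lemma coef_from_eq:
  assumes hf: "\<forall>x. complex_of_real (f x) = tp N cf x"
    and hu: "\<forall>x. complex_of_real (U0 x) = tp N cu x"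
    and hw: "\<forall>x. complex_of_real (w x) = tp N cw x"
    and su: "supp N cu" and sw: "supp N cw"
    and eq: "\<forall>\<phi>\<in>VN N. l2inner f \<phi> = l2inner U0 \<phi> - dt * l2inner (Bop (\<lambda>x. (U0 x + w x) / 2)) \<phi>
                + c * l2inner (deriv (fracD \<alpha> (\<lambda>x. U0 x + f x))) \<phi>"
    and k: "\<bar>k\<bar> \<le> int N"
  shows "cf k = cu k - complex_of_real dt * (6 * cv N (\<lambda>j. (cu j + cw j) / 2) (\<lambda>j. \<i> * of_int j * ((cu j + cw j) / 2)) k)
           + complex_of_real c * (\<i> * of_int k * (complex_of_real (\<bar>of_int k\<bar> powr \<alpha>) * (cu k + cf k)))"
proof -
  define a where "a = (\<lambda>x. (U0 x + w x) / 2)"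
  define ca where "ca = (\<lambda>j. (cu j + cw j) / 2)"
  have ha: "\<forall>x. complex_of_real (a x) = tp N ca x"
    unfolding a_def ca_def tp_avg using hu hw by simp
  have sa: "supp N ca" unfolding ca_def using su sw by (rule supp_avg)
  define cB where "cB = (\<lambda>k. 6 * cv N ca (\<lambda>j. \<i> * of_int j * ca j) k)"
  have hB: "\<forall>x. complex_of_real (Bop a x) = tp (2*N) cB x"
  proof
    fix x
    have "complex_of_real (Bop a x) = 6 * complex_of_real (a x * deriv a x)"
      unfolding Bop_def by simp
    also have "\<dots> = 6 * tp (2*N) (cv N ca (\<lambda>j. \<i> * of_int j * ca j)) x"
      using prodfun[OF ha sa] by simp
    also have "\<dots> = tp (2*N) cB x" unfolding cB_def by (rule tp_scale[symmetric])
    finally show "complex_of_real (Bop a x) = tp (2*N) cB x" .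
  qed
  define g where "g = (\<lambda>x. U0 x + f x)"
  have hg: "\<forall>x. complex_of_real (g x) = tp N (\<lambda>j. cu j + cf j) x"
    unfolding g_def tp_plus using hu hf by simp
  define cD where "cD = (\<lambda>j. \<i> * of_int j * (complex_of_real (\<bar>of_int j\<bar> powr \<alpha>) * (cu j + cf j)))"
  have hD: "\<forall>x. complex_of_real (deriv (fracD \<alpha> g) x) = tp N cD x"
    unfolding cD_def using Dfun[OF hg] .
  have k2: "\<bar>k\<bar> \<le> int (2*N)" using k by simp
  have ff: "fcoef f k = cf k" using fcoef_tp[OF hf, of k] k by simp
  have fu: "fcoef U0 k = cu k" using fcoef_tp[OF hu, of k] k by simp
  have fB: "fcoef (Bop a) k = cB k" using fcoef_tp[OF hB, of k] k2 by simp
  have fD: "fcoef (deriv (fracD \<alpha> g)) k = cD k" using fcoef_tp[OF hD, of k] k by simp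
  have cf': "continuous_on {-pi..pi} f" using cont_real_tp[OF hf] .
  have cu': "continuous_on {-pi..pi} U0" using cont_real_tp[OF hu] .
  have cB': "continuous_on {-pi..pi} (Bop a)" using cont_real_tp[OF hB] .
  have cD': "continuous_on {-pi..pi} (deriv (fracD \<alpha> g))" using cont_real_tp[OF hD] .
  define C where "C = (\<lambda>x::real. cos (of_int k * x))"
  define S where "S = (\<lambda>x::real. sin (of_int k * x))"
  have ec: "l2inner f C = l2inner U0 C - dt * l2inner (Bop a) C + c * l2inner (deriv (fracD \<alpha> g)) C"
    using eq cos_VN[OF k] unfolding C_def a_def g_def by blast
  have es: "l2inner f S = l2inner U0 S - dt * l2inner (Bop a) S + c * l2inner (deriv (fracD \<alpha> g)) S"
    using eq sin_VN[OF k] unfolding S_def a_def g_def by blast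
  have l2f: "complex_of_real (2*pi) * cf k = complex_of_real (l2inner f C) - \<i> * complex_of_real (l2inner f S)"
    using fcoef_l2[OF cf', of k] ff unfolding C_def S_def by simp
  have l2u: "complex_of_real (2*pi) * cu k = complex_of_real (l2inner U0 C) - \<i> * complex_of_real (l2inner U0 S)"
    using fcoef_l2[OF cu', of k] fu unfolding C_def S_def by simp
  have l2B: "complex_of_real (2*pi) * cB k = complex_of_real (l2inner (Bop a) C) - \<i> * complex_of_real (l2inner (Bop a) S)"
    using fcoef_l2[OF cB', of k] fB unfolding C_def S_def by simp
  have l2D: "complex_of_real (2*pi) * cD k = complex_of_real (l2inner (deriv (fracD \<alpha> g)) C) - \<i> * complex_of_real (l2inner (deriv (fracD \<alpha> g)) S)"
    using fcoef_l2[OF cD', of k] fD unfolding C_def S_def by simp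
  have "complex_of_real (2*pi) * (cu k - complex_of_real dt * cB k + complex_of_real c * cD k)
      = complex_of_real (2*pi) * cu k - complex_of_real dt * (complex_of_real (2*pi) * cB k) + complex_of_real c * (complex_of_real (2*pi) * cD k)"
    by (simp add: algebra_simps)
  also have "\<dots> = complex_of_real (l2inner U0 C - dt * l2inner (Bop a) C + c * l2inner (deriv (fracD \<alpha> g)) C)
      - \<i> * complex_of_real (l2inner U0 S - dt * l2inner (Bop a) S + c * l2inner (deriv (fracD \<alpha> g)) S)"
    unfolding l2u l2B l2D by (simp add: algebra_simps)
  also have "\<dots> = complex_of_real (2*pi) * cf k"
    unfolding l2f ec[symmetric] es[symmetric] ..
  finally have "cf k = cu k - complex_of_real dt * cB k + complex_of_real c * cD k"
    by simp
  then show ?thesis unfolding cB_def cD_def ca_def .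
qed

lemma eq_from_coef:
  assumes h1: "\<forall>x. complex_of_real (U1 x) = tp N cw x"
    and hu: "\<forall>x. complex_of_real (U0 x) = tp N cu x"
    and su: "supp N cu" and sw: "supp N cw"
    and coef: "\<forall>k. \<bar>k\<bar> \<le> int N \<longrightarrow> cw k = cu k
        - complex_of_real dt * (6 * cv N (\<lambda>j. (cu j + cw j) / 2) (\<lambda>j. \<i> * of_int j * ((cu j + cw j) / 2)) k)
        + complex_of_real (\<epsilon>\<^sup>2 * dt) * (\<i> * of_int k * (complex_of_real (\<bar>of_int k\<bar> powr \<alpha>) * ((cu k + cw k) / 2)))"
  shows "\<forall>\<phi>\<in>VN N. l2inner U1 \<phi>
              = l2inner U0 \<phi>
                - 6 * dt * l2inner (\<lambda>x. (U0 x + U1 x) / 2 * deriv (\<lambda>y. (U0 y + U1 y) / 2) x) \<phi>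
                + \<epsilon>\<^sup>2 * dt * l2inner (deriv (fracD \<alpha> (\<lambda>y. (U0 y + U1 y) / 2))) \<phi>"
proof
  fix \<phi> assume "\<phi> \<in> VN N"
  note hp = VN_tp(1)[OF this]
  define d where "d = fcoef \<phi>"
  define a where "a = (\<lambda>y. (U0 y + U1 y) / 2)"
  define ca where "ca = (\<lambda>j. (cu j + cw j) / 2)"
  have ha: "\<forall>x. complex_of_real (a x) = tp N ca x"
    unfolding a_def ca_def tp_avg using hu h1 by simp
  have sa: "supp N ca" unfolding ca_def using su sw by (rule supp_avg)
  define P where "P = (\<lambda>x. a x * deriv a x)"
  define cP where "cP = cv N ca (\<lambda>j. \<i> * of_int j * ca j)"
  have hP: "\<forall>x. complex_of_real (P x) = tp (2*N) cP x"
    unfolding P_def cP_def using prodfun[OF ha sa] .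
  define Q where "Q = deriv (fracD \<alpha> a)"
  define cQ where "cQ = (\<lambda>j. \<i> * of_int j * (complex_of_real (\<bar>of_int j\<bar> powr \<alpha>) * ca j))"
  have hQ: "\<forall>x. complex_of_real (Q x) = tp N cQ x"
    unfolding Q_def cQ_def using Dfun[OF ha] .
  have L1: "complex_of_real (l2inner U1 \<phi>) = complex_of_real (2*pi) * (\<Sum>j = - int N..int N. d j * fcoef U1 (- j))"
    using l2_tp[OF cont_real_tp[OF h1] hp] unfolding d_def .
  have LU: "complex_of_real (l2inner U0 \<phi>) = complex_of_real (2*pi) * (\<Sum>j = - int N..int N. d j * fcoef U0 (- j))"
    using l2_tp[OF cont_real_tp[OF hu] hp] unfolding d_def .
  have LP: "complex_of_real (l2inner P \<phi>) = complex_of_real (2*pi) * (\<Sum>j = - int N..int N. d j * fcoef P (- j))"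
    using l2_tp[OF cont_real_tp[OF hP] hp] unfolding d_def .
  have LQ: "complex_of_real (l2inner Q \<phi>) = complex_of_real (2*pi) * (\<Sum>j = - int N..int N. d j * fcoef Q (- j))"
    using l2_tp[OF cont_real_tp[OF hQ] hp] unfolding d_def .
  have tm: "d j * fcoef U1 (- j) = d j * fcoef U0 (- j) - complex_of_real (6 * dt) * (d j * fcoef P (- j))
        + complex_of_real (\<epsilon>\<^sup>2 * dt) * (d j * fcoef Q (- j))" if j: "j \<in> {- int N..int N}" for j
  proof -
    have jj: "\<bar>- j\<bar> \<le> int N" "\<bar>- j\<bar> \<le> int (2*N)" using j by auto
    have e1: "fcoef U1 (- j) = cw (- j)" using fcoef_tp[OF h1, of "- j"] jj by simp
    have e2: "fcoef U0 (- j) = cu (- j)" using fcoef_tp[OF hu, of "- j"] jj by simp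
    have e3: "fcoef P (- j) = cP (- j)" using fcoef_tp[OF hP, of "- j"] jj by simp
    have e4: "fcoef Q (- j) = cQ (- j)" using fcoef_tp[OF hQ, of "- j"] jj by simp
    have c: "cw (- j) = cu (- j) - complex_of_real dt * (6 * cP (- j)) + complex_of_real (\<epsilon>\<^sup>2 * dt) * cQ (- j)"
      using coef jj(1) unfolding cP_def cQ_def ca_def by blast
    show ?thesis unfolding e1 e2 e3 e4 c by (simp add: algebra_simps)
  qed
  have "complex_of_real (l2inner U1 \<phi>) = complex_of_real (2*pi) *
      (\<Sum>j = - int N..int N. d j * fcoef U0 (- j) - complex_of_real (6 * dt) * (d j * fcoef P (- j))
        + complex_of_real (\<epsilon>\<^sup>2 * dt) * (d j * fcoef Q (- j)))"
    unfolding L1 by (rule arg_cong[where f="\<lambda>z. complex_of_real (2*pi) * z"], rule sum.cong[OF refl tm])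
  also have "\<dots> = complex_of_real (2*pi) * ((\<Sum>j = - int N..int N. d j * fcoef U0 (- j))
      - complex_of_real (6 * dt) * (\<Sum>j = - int N..int N. d j * fcoef P (- j))
      + complex_of_real (\<epsilon>\<^sup>2 * dt) * (\<Sum>j = - int N..int N. d j * fcoef Q (- j)))"
    by (simp add: sum.distrib sum_subtractf sum_distrib_left)
  also have "\<dots> = complex_of_real (l2inner U0 \<phi> - 6 * dt * l2inner P \<phi> + \<epsilon>\<^sup>2 * dt * l2inner Q \<phi>)"
    unfolding of_real_add of_real_diff of_real_mult LU LP LQ by (simp add: algebra_simps)
  finally have "l2inner U1 \<phi> = l2inner U0 \<phi> - 6 * dt * l2inner P \<phi> + \<epsilon>\<^sup>2 * dt * l2inner Q \<phi>"
    by (simp only: of_real_eq_iff)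
  then show "l2inner U1 \<phi> = l2inner U0 \<phi>
                - 6 * dt * l2inner (\<lambda>x. (U0 x + U1 x) / 2 * deriv (\<lambda>y. (U0 y + U1 y) / 2) x) \<phi>
                + \<epsilon>\<^sup>2 * dt * l2inner (deriv (fracD \<alpha> (\<lambda>y. (U0 y + U1 y) / 2))) \<phi>"
    unfolding P_def Q_def a_def .
qed

lemma refl_sum:
  fixes F :: "int \<Rightarrow> 'a::comm_monoid_add"
  assumes z: "\<And>j. j \<notin> {- int N..int N} \<or> k - j \<notin> {- int N..int N} \<Longrightarrow> F j = 0"
  shows "(\<Sum>j\<in>{- int N..int N}. F j) = (\<Sum>j\<in>{- int N..int N}. F (k - j))"
proof -
  define R where "R = {- int N..int N}"
  define T where "T = {j\<in>R. k - j \<in> R}"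
  have "(\<Sum>j\<in>R. F j) = (\<Sum>j\<in>T. F j)"
    by (rule sum.mono_neutral_right) (auto simp: T_def R_def z)
  also have "\<dots> = (\<Sum>j\<in>T. F (k - j))"
    by (rule sum.reindex_bij_witness[of _ "\<lambda>j. k - j" "\<lambda>j. k - j"]) (auto simp: T_def)
  also have "\<dots> = (\<Sum>j\<in>R. F (k - j))"
    by (rule sum.mono_neutral_left) (auto simp: T_def R_def z)
  finally show ?thesis unfolding R_def .
qed

lemma cv_comm:
  assumes "supp N X" "supp N Y"
  shows "cv N X Y k = cv N Y X k"
  unfolding cv_def
  by (subst refl_sum[where k = k]) (use assms supp_z in \<open>auto simp: mult.commute\<close>)

lemma cv_sym:
  assumes sX: "supp N X"
  shows "cv N X (\<lambda>j. \<i> * of_int j * X j) k = \<i> * of_int k / 2 * cv N X X k"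
proof -
  define S where "S = cv N X (\<lambda>j. \<i> * of_int j * X j) k"
  have "S = (\<Sum>j\<in>{- int N..int N}. X (k - j) * (\<i> * of_int j * X j))"
    unfolding S_def cv_def
    by (subst refl_sum[where k = k]) (use sX supp_z in auto)
  then have "2 * S = (\<Sum>j\<in>{- int N..int N}. X j * (\<i> * of_int (k - j) * X (k - j))) + (\<Sum>j\<in>{- int N..int N}. X (k - j) * (\<i> * of_int j * X j))"
    unfolding S_def cv_def by simp
  also have "\<dots> = (\<Sum>j\<in>{- int N..int N}. \<i> * of_int k * (X j * X (k - j)))"
    unfolding sum.distrib[symmetric] by (intro sum.cong refl) (simp add: algebra_simps)
  also have "\<dots> = \<i> * of_int k * cv N X X k"
    unfolding cv_def by (simp add: sum_distrib_left)
  finally have "2 * S = \<i> * of_int k * cv N X X k" .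
  then have "S = \<i> * of_int k * cv N X X k / 2" by (metis mult.commute nonzero_mult_div_cancel_left zero_neq_numeral)
  then show ?thesis unfolding S_def by simp
qed

lemma cv_diff:
  assumes "supp N a" "supp N b"
  shows "cv N a a k - cv N b b k = cv N (\<lambda>j. a j - b j) (\<lambda>j. a j + b j) k"
proof -
  have c: "cv N a b k = cv N b a k" using cv_comm[OF assms] .
  have "cv N (\<lambda>j. a j - b j) (\<lambda>j. a j + b j) k = cv N a a k + cv N a b k - cv N b a k - cv N b b k"
    unfolding cv_def by (simp add: algebra_simps sum.distrib sum_subtractf)
  then show ?thesis using c by simp
qed

lemma cmod_1i: "cmod (1 - \<i> * complex_of_real t) = sqrt (1 + t\<^sup>2)" "cmod (1 + \<i> * complex_of_real t) = sqrt (1 + t\<^sup>2)"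
  by (simp_all add: cmod_def)

lemma step_bound:
  assumes "z * (1 - \<i> * complex_of_real t) = u * (1 + \<i> * complex_of_real t) - w"
  shows "cmod z \<le> cmod u + cmod w"
proof -
  define T where "T = sqrt (1 + t\<^sup>2)"
  have T1: "1 \<le> T" unfolding T_def by simp
  have "cmod z * T = cmod (u * (1 + \<i> * complex_of_real t) - w)"
    using assms cmod_1i unfolding T_def by (metis norm_mult)
  also have "\<dots> \<le> cmod u * T + cmod w"
    using norm_triangle_ineq4[of "u * (1 + \<i> * complex_of_real t)" w] cmod_1i unfolding T_def by (simp add: norm_mult)
  also have "\<dots> \<le> cmod u * T + cmod w * T" using T1 by (simp add: mult_left_mono[of 1 T, simplified])
  finally have "cmod z * T \<le> (cmod u + cmod w) * T" by (simp add: algebra_simps)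
  then show ?thesis using T1 by simp
qed

lemma step_diff:
  assumes "z1 * (1 - \<i> * complex_of_real t) = u * (1 + \<i> * complex_of_real t) - w1"
    and "z2 * (1 - \<i> * complex_of_real t) = u * (1 + \<i> * complex_of_real t) - w2"
  shows "cmod (z1 - z2) \<le> cmod (w1 - w2)"
proof -
  have "(z1 - z2) * (1 - \<i> * complex_of_real t) = z1 * (1 - \<i> * complex_of_real t) - z2 * (1 - \<i> * complex_of_real t)"
    by (simp add: algebra_simps)
  also have "\<dots> = (u * (1 + \<i> * complex_of_real t) - w1) - (u * (1 + \<i> * complex_of_real t) - w2)"
    unfolding assms ..
  also have "\<dots> = 0 * (1 + \<i> * complex_of_real t) - (w1 - w2)" by simp
  finally have "(z1 - z2) * (1 - \<i> * complex_of_real t) = 0 * (1 + \<i> * complex_of_real t) - (w1 - w2)" .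
  from step_bound[OF this] show ?thesis by simp
qed

definition nrm :: "real \<Rightarrow> nat \<Rightarrow> (int \<Rightarrow> complex) \<Rightarrow> real" where
  "nrm s N c = sqrt (\<Sum>k\<in>{- int N..int N}. wt s k * (cmod (c k))\<^sup>2)"

lemma nrm_L2: "nrm s N c = L2_set (\<lambda>k. sqrt (wt s k) * cmod (c k)) {- int N..int N}"
  unfolding nrm_def L2_set_def
  by (intro arg_cong[where f=sqrt] sum.cong refl) (simp add: power_mult_distrib less_imp_le[OF wt_pos])

lemma nrm_nonneg: "0 \<le> nrm s N c"
  unfolding nrm_def by (intro real_sqrt_ge_zero sum_nonneg mult_nonneg_nonneg) (auto intro: less_imp_le[OF wt_pos])

lemma nrm_sq: "(nrm s N c)\<^sup>2 = (\<Sum>k\<in>{- int N..int N}. wt s k * (cmod (c k))\<^sup>2)"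
  unfolding nrm_def by (intro real_sqrt_pow2 sum_nonneg mult_nonneg_nonneg) (auto intro: less_imp_le[OF wt_pos])

lemma nrm_tri:
  assumes p: "0 \<le> p" and r: "0 \<le> r"
    and h: "\<And>k. k \<in> {- int N..int N} \<Longrightarrow> cmod (z k) \<le> p * cmod (u k) + r * cmod (w k)"
  shows "nrm s N z \<le> p * nrm s N u + r * nrm s N w"
proof -
  define R where "R = {- int N..int N}"
  have "nrm s N z \<le> L2_set (\<lambda>k. p * (sqrt (wt s k) * cmod (u k)) + r * (sqrt (wt s k) * cmod (w k))) R"
    unfolding nrm_L2 R_def[symmetric]
  proof (rule L2_set_mono)
    fix k assume "k \<in> R"
    then have "sqrt (wt s k) * cmod (z k) \<le> sqrt (wt s k) * (p * cmod (u k) + r * cmod (w k))"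
      using h wt_pos[of s k] unfolding R_def by (intro mult_left_mono) auto
    then show "sqrt (wt s k) * cmod (z k) \<le> p * (sqrt (wt s k) * cmod (u k)) + r * (sqrt (wt s k) * cmod (w k))"
      by (simp add: algebra_simps)
  next
    fix i assume "i \<in> R"
    show "0 \<le> sqrt (wt s i) * cmod (z i)" using wt_pos[of s i] by simp
  qed
  also have "\<dots> \<le> L2_set (\<lambda>k. p * (sqrt (wt s k) * cmod (u k))) R + L2_set (\<lambda>k. r * (sqrt (wt s k) * cmod (w k))) R"
    by (rule L2_set_triangle_ineq)
  also have "\<dots> = p * nrm s N u + r * nrm s N w"
    unfolding nrm_L2 R_def L2_set_right_distrib[OF p] L2_set_right_distrib[OF r] ..
  finally show ?thesis .
qed

lemma conv_diff:
  fixes f :: "nat \<Rightarrow> complex"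
  assumes h: "\<And>l. cmod (f (Suc l) - f l) \<le> C * q ^ l" and q: "0 \<le> q" "q < 1"
  shows "convergent f"
proof -
  have s: "summable (\<lambda>l. f (Suc l) - f l)"
    by (rule summable_comparison_test[of _ "\<lambda>l. C * q ^ l"]) (use h q in \<open>auto intro!: summable_mult summable_geometric\<close>)
  have "(\<lambda>n. f 0 + (\<Sum>i<n. f (Suc i) - f i)) \<longlonglongrightarrow> f 0 + suminf (\<lambda>l. f (Suc l) - f l)"
    by (intro tendsto_intros summable_LIMSEQ s)
  moreover have "(\<lambda>n. f 0 + (\<Sum>i<n. f (Suc i) - f i)) = f"
    by (rule ext) (simp add: sum_lessThan_telescope)
  ultimately show ?thesis unfolding convergent_def by auto
qed

lemma eta_ineq:
  fixes \<zeta> \<eta> :: real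
  assumes "0 < \<zeta>" "\<zeta> < 1" "\<eta> = (8 - \<zeta>) / (1 - \<zeta>)"
  shows "\<zeta> * (1 + \<eta>)\<^sup>2 \<le> \<eta> * (\<eta> - 1)" "8 \<le> \<eta>"
proof -
  have t: "0 < 1 - \<zeta>" using assms by simp
  have e1: "1 + \<eta> = (9 - 2 * \<zeta>) / (1 - \<zeta>)" using t assms(3) by (simp add: field_simps)
  have e2: "\<eta> - 1 = 7 / (1 - \<zeta>)" using t assms(3) by (simp add: field_simps)
  have poly: "\<zeta> * (9 - 2 * \<zeta>)\<^sup>2 \<le> (8 - \<zeta>) * 7"
  proof -
    have "(8 - \<zeta>) * 7 - \<zeta> * (9 - 2 * \<zeta>)\<^sup>2 = 4 * ((1 - \<zeta>) * (14 - 8 * \<zeta> + \<zeta>\<^sup>2))"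
      by (simp add: power2_eq_square algebra_simps)
    moreover have "0 \<le> 14 - 8 * \<zeta> + \<zeta>\<^sup>2" using assms by (simp add: power2_eq_square)
    ultimately show ?thesis using t by (smt (verit) mult_nonneg_nonneg)
  qed
  have "\<zeta> * (1 + \<eta>)\<^sup>2 = \<zeta> * (9 - 2 * \<zeta>)\<^sup>2 / (1 - \<zeta>)\<^sup>2" unfolding e1 by (simp add: power_divide)
  also have "\<dots> \<le> (8 - \<zeta>) * 7 / (1 - \<zeta>)\<^sup>2" using poly t by (intro divide_right_mono) auto
  also have "\<dots> = \<eta> * (\<eta> - 1)"
  proof -
    have "\<eta> * (\<eta> - 1) = (8 - \<zeta>) / (1 - \<zeta>) * (7 / (1 - \<zeta>))" using e2 assms(3) by simp
    then show ?thesis by (simp add: power2_eq_square)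
  qed
  finally show "\<zeta> * (1 + \<eta>)\<^sup>2 \<le> \<eta> * (\<eta> - 1)" .
  show "8 \<le> \<eta>" unfolding assms(3) using t assms by (simp add: field_simps)
qed

lemma rearr: "z = u - d + a * (u + z) \<Longrightarrow> z * (1 - a) = u * (1 + a) - (d :: complex)"
  by (simp add: algebra_simps)

lemma sq64: "64 * x\<^sup>2 * x\<^sup>2 = (8 * x\<^sup>2 :: real)\<^sup>2"
  by (simp add: power2_eq_square)
lemma ncv: assumes sa: "supp N a" and s2: "2 \<le> s" and s3: "s \<le> 3"
  shows "nrm s N (cv N a a) \<le> 8 * (nrm s N a)\<^sup>2"
  proof -
    have "(nrm s N (cv N a a))\<^sup>2 \<le> 64 * (nrm s N a)\<^sup>2 * (nrm s N a)\<^sup>2"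
      unfolding nrm_sq cv_def by (rule alg[OF sa sa s2 s3])
    also have "\<dots> = (8 * (nrm s N a)\<^sup>2)\<^sup>2" by (rule sq64)
    finally have h: "(nrm s N (cv N a a))\<^sup>2 \<le> (8 * (nrm s N a)\<^sup>2)\<^sup>2" .
    show ?thesis by (rule power2_le_imp_le[OF h]) simp
  qed

theorem lemma3p3:
  fixes \<alpha> \<epsilon> T dt \<zeta> \<eta> :: real
    and N n :: nat
    and U0 :: "real \<Rightarrow> real"
    and v :: "nat \<Rightarrow> real \<Rightarrow> real"
  assumes alpha: "1 \<le> \<alpha>" "\<alpha> \<le> 2"
    and T: "T > 0" and dt: "dt > 0" and step: "real (n + 1) * dt \<le> T"
    and U0_VN: "U0 \<in> VN N"
    and v0: "v 0 = U0"
    and v_VN: "\<forall>l. v l \<in> VN N"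
    and v_iter: "\<forall>l. \<forall>\<phi>\<in>VN N.
        l2inner (v (Suc l)) \<phi>
          = l2inner U0 \<phi>
            - dt * l2inner (Bop (\<lambda>x. (U0 x + v l x) / 2)) \<phi>
            + 1/2 * \<epsilon>\<^sup>2 * dt * l2inner (deriv (fracD \<alpha> (\<lambda>x. U0 x + v (Suc l) x))) \<phi>"
    and zeta: "0 < \<zeta>" "\<zeta> < 1"
    and eta: "\<eta> = (8 - \<zeta>) / (1 - \<zeta>)"
    and cfl: "6 * real N * dt * (\<eta> * sob_norm (1 + \<alpha>) U0) \<le> \<zeta>"
  shows "\<exists>U1 \<in> VN N.
           (\<lambda>l. sob_norm 0 (\<lambda>x. v l x - U1 x)) \<longlonglongrightarrow> 0
         \<and> (\<forall>\<phi>\<in>VN N. l2inner U1 \<phi>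
              = l2inner U0 \<phi>
                - 6 * dt * l2inner (\<lambda>x. (U0 x + U1 x) / 2 * deriv (\<lambda>y. (U0 y + U1 y) / 2) x) \<phi>
                + \<epsilon>\<^sup>2 * dt * l2inner (deriv (fracD \<alpha> (\<lambda>y. (U0 y + U1 y) / 2))) \<phi>)
         \<and> sob_norm (1 + \<alpha>) U1 \<le> \<eta> * sob_norm (1 + \<alpha>) U0"
proof -
  define s where "s = 1 + \<alpha>"
  have s2: "2 \<le> s" and s3: "s \<le> 3" using alpha unfolding s_def by auto
  define U where "U = fcoef U0"
  define V where "V = (\<lambda>l. fcoef (v l))"
  have hU: "\<forall>x. complex_of_real (U0 x) = tp N U x" using VN_tp(1)[OF U0_VN] unfolding U_def .
  have sU: "supp N U" using VN_tp(2)[OF U0_VN] unfolding U_def .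
  have hV: "\<forall>x. complex_of_real (v l x) = tp N (V l) x" for l using VN_tp(1) v_VN unfolding V_def by blast
  have sV: "supp N (V l)" for l using VN_tp(2) v_VN unfolding V_def by blast
  define M where "M = sob_norm (1 + \<alpha>) U0"
  have M_eq: "M = nrm s N U" unfolding M_def nrm_def wt_def s_def using sob_tp[OF hU] by simp
  have M0: "0 \<le> M" using M_eq nrm_nonneg[of s N U] by simp
  have eta8: "8 \<le> \<eta>" and etaI: "\<zeta> * (1 + \<eta>)\<^sup>2 \<le> \<eta> * (\<eta> - 1)" using eta_ineq[OF zeta eta] by auto
  have cfl': "6 * real N * dt * (\<eta> * M) \<le> \<zeta>" using cfl unfolding M_def .
  have V0: "V 0 = U" unfolding V_def U_def v0 ..
  define ah where "ah = (\<lambda>l j. (U j + V l j) / 2)"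
  have sah: "supp N (ah l)" for l unfolding ah_def using supp_avg[OF sU sV] .
  define \<sigma> where "\<sigma> = (\<lambda>k::int. 1/2 * \<epsilon>\<^sup>2 * dt * of_int k * \<bar>of_int k\<bar> powr \<alpha>)"
  define C where "C = (\<lambda>l k. cv N (ah l) (\<lambda>j. \<i> * of_int j * ah l j) k)"
  define c where "c = 1/2 * \<epsilon>\<^sup>2 * dt"
  have Fe: "V (Suc l) k = U k - complex_of_real dt * (6 * C l k)
      + complex_of_real c * (\<i> * of_int k * (complex_of_real (\<bar>of_int k\<bar> powr \<alpha>) * (U k + V (Suc l) k)))"
    if k: "\<bar>k\<bar> \<le> int N" for l k
  proof -
    have eq: "\<forall>\<phi>\<in>VN N. l2inner (v (Suc l)) \<phi> = l2inner U0 \<phi> - dt * l2inner (Bop (\<lambda>x. (U0 x + v l x) / 2)) \<phi>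
                + c * l2inner (deriv (fracD \<alpha> (\<lambda>x. U0 x + v (Suc l) x))) \<phi>"
      using v_iter unfolding c_def by blast
    show ?thesis using coef_from_eq[OF hV[of "Suc l"] hU hV[of l] sU sV[of l] eq k]
      unfolding C_def ah_def by simp
  qed
  have F4: "V (Suc l) k * (1 - \<i> * complex_of_real (\<sigma> k)) = U k * (1 + \<i> * complex_of_real (\<sigma> k)) - complex_of_real (6 * dt) * C l k"
    if k: "\<bar>k\<bar> \<le> int N" for l k
  proof -
    have e1: "complex_of_real c * (\<i> * of_int k * (complex_of_real (\<bar>of_int k\<bar> powr \<alpha>) * (U k + V (Suc l) k)))
        = \<i> * complex_of_real (\<sigma> k) * (U k + V (Suc l) k)"
      unfolding \<sigma>_def c_def by simp
    have "V (Suc l) k = U k - complex_of_real dt * (6 * C l k) + \<i> * complex_of_real (\<sigma> k) * (U k + V (Suc l) k)"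
      using Fe[OF k, of l] unfolding e1 .
    from rearr[OF this] show ?thesis by simp
  qed
  have Csym: "C l k = \<i> * of_int k / 2 * cv N (ah l) (ah l) k" for l k
    unfolding C_def using cv_sym[OF sah] .
  have ck: "cmod (complex_of_real (6 * dt) * (\<i> * of_int k / 2 * X)) \<le> 3 * dt * real N * cmod X"
    if k: "\<bar>k\<bar> \<le> int N" for k X
  proof -
    have "cmod (complex_of_real (6 * dt) * (\<i> * of_int k / 2 * X)) = 3 * dt * \<bar>of_int k\<bar> * cmod X"
      using dt by (simp add: norm_mult norm_divide)
    also have "\<dots> \<le> 3 * dt * real N * cmod X"
      using k dt by (intro mult_right_mono mult_left_mono) auto
    finally show ?thesis .
  qed
  have nah: "nrm s N (ah l) \<le> 1/2 * nrm s N U + 1/2 * nrm s N (V l)" for l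
  proof (rule nrm_tri)
    fix k
    show "cmod (ah l k) \<le> 1/2 * cmod (U k) + 1/2 * cmod (V l k)"
      unfolding ah_def using norm_triangle_ineq[of "U k" "V l k"] by (simp add: norm_divide)
  qed auto
  have bnd: "nrm s N (V l) \<le> \<eta> * M" for l
  proof (induction l)
    case 0
    then show ?case using V0 M_eq M0 eta8 by (simp add: mult_le_cancel_right1)
  next
    case (Suc l)
    have "nrm s N (V (Suc l)) \<le> 1 * nrm s N U + (3 * dt * real N) * nrm s N (cv N (ah l) (ah l))"
    proof (rule nrm_tri)
      fix k assume "k \<in> {- int N..int N}"
      then have k: "\<bar>k\<bar> \<le> int N" by auto
      have "cmod (V (Suc l) k) \<le> cmod (U k) + cmod (complex_of_real (6 * dt) * C l k)"
        by (rule step_bound[OF F4[OF k]])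
      also have "\<dots> \<le> cmod (U k) + 3 * dt * real N * cmod (cv N (ah l) (ah l) k)"
      proof -
        have "cmod (complex_of_real (6 * dt) * C l k) \<le> 3 * dt * real N * cmod (cv N (ah l) (ah l) k)"
          unfolding Csym by (rule ck[OF k])
        then show ?thesis by (rule add_left_mono)
      qed
      finally show "cmod (V (Suc l) k) \<le> 1 * cmod (U k) + 3 * dt * real N * cmod (cv N (ah l) (ah l) k)" by simp
    qed (use dt in auto)
    also have "\<dots> \<le> M + (3 * dt * real N) * (8 * (nrm s N (ah l))\<^sup>2)"
      using ncv[OF sah[of l] s2 s3] dt M_eq by (intro add_mono mult_left_mono) auto
    also have "\<dots> \<le> M + (3 * dt * real N) * (8 * ((1 + \<eta>) * M / 2)\<^sup>2)"
    proof -
      have "nrm s N (ah l) \<le> (1 + \<eta>) * M / 2" using nah[of l] Suc.IH M_eq by (simp add: algebra_simps)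
      then have "(nrm s N (ah l))\<^sup>2 \<le> ((1 + \<eta>) * M / 2)\<^sup>2" using nrm_nonneg[of s N "ah l"] by (intro power_mono) auto
      then show ?thesis using dt by (intro add_mono mult_left_mono) auto
    qed
    also have "\<dots> = M + (6 * real N * dt * (\<eta> * M)) * ((1 + \<eta>)\<^sup>2 * M / \<eta>)"
      using eta8 by (simp add: power2_eq_square field_simps)
    also have "\<dots> \<le> M + \<zeta> * ((1 + \<eta>)\<^sup>2 * M / \<eta>)"
      using cfl' M0 eta8 by (intro add_mono mult_right_mono) auto
    also have "\<dots> = M + (\<zeta> * (1 + \<eta>)\<^sup>2) * M / \<eta>" by simp
    also have "\<dots> \<le> M + (\<eta> * (\<eta> - 1)) * M / \<eta>"
      using etaI M0 eta8 by (intro add_mono divide_right_mono mult_right_mono) auto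
    also have "\<dots> = \<eta> * M" using eta8 by (simp add: field_simps)
    finally show ?case .
  qed
  have nahb: "nrm s N (ah l) \<le> (1 + \<eta>) * M / 2" for l
    using nah[of l] bnd[of l] M_eq by (simp add: algebra_simps)
  define Q0 where "Q0 = (\<lambda>c::int\<Rightarrow>complex. \<Sum>k\<in>{- int N..int N}. (cmod (c k))\<^sup>2)"
  have Q0nn: "0 \<le> Q0 c" for c unfolding Q0_def by (intro sum_nonneg) auto
  define \<Delta> where "\<Delta> = (\<lambda>l k. V (Suc l) k - V l k)"
  define X where "X = dt * real N * ((1 + \<eta>) * M)"
  have X0: "0 \<le> X" unfolding X_def using dt M0 eta8 by auto
  have X316: "X \<le> 3 / 16"
  proof -
    have "X \<le> dt * real N * (9 / 8 * \<eta> * M)"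
      unfolding X_def using dt M0 eta8 by (intro mult_left_mono mult_right_mono) auto
    also have "\<dots> = 9 / 48 * (6 * real N * dt * (\<eta> * M))" by simp
    also have "\<dots> \<le> 9 / 48 * \<zeta>" using cfl' by (intro mult_left_mono) auto
    also have "\<dots> \<le> 3 / 16" using zeta by simp
    finally show ?thesis .
  qed
  have contr: "Q0 (\<Delta> (Suc l)) \<le> 1/4 * Q0 (\<Delta> l)" for l
  proof -
    define a where "a = ah (Suc l)"
    define b where "b = ah l"
    define \<delta> where "\<delta> = (\<lambda>j. a j - b j)"
    define g where "g = (\<lambda>j. a j + b j)"
    have sa: "supp N a" and sb: "supp N b" unfolding a_def b_def by (rule sah)+
    have sg: "supp N g" unfolding g_def using supp_plus[OF sa sb] .
    have pk: "cmod (\<Delta> (Suc l) k) \<le> 3 * dt * real N * cmod (cv N \<delta> g k)" if k: "\<bar>k\<bar> \<le> int N" for k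
    proof -
      have "cmod (\<Delta> (Suc l) k) \<le> cmod (complex_of_real (6 * dt) * C (Suc l) k - complex_of_real (6 * dt) * C l k)"
        unfolding \<Delta>_def by (rule step_diff[OF F4[OF k, of "Suc l"] F4[OF k, of l]])
      also have "complex_of_real (6 * dt) * C (Suc l) k - complex_of_real (6 * dt) * C l k
          = complex_of_real (6 * dt) * (\<i> * of_int k / 2 * (cv N a a k - cv N b b k))"
        unfolding Csym a_def b_def by (simp add: algebra_simps)
      also have "\<dots> = complex_of_real (6 * dt) * (\<i> * of_int k / 2 * cv N \<delta> g k)"
        unfolding cv_diff[OF sa sb] \<delta>_def g_def ..
      finally show ?thesis using ck[OF k, of "cv N \<delta> g k"] by linarith
    qed
    have dl: "(\<Sum>j\<in>{- int N..int N}. (cmod (\<delta> j))\<^sup>2) = 1/4 * Q0 (\<Delta> l)"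
    proof -
      have dd: "\<delta> j = (V (Suc l) j - V l j) / 2" for j
        unfolding \<delta>_def a_def b_def ah_def by (simp add: field_simps)
      have d2: "(cmod (\<delta> j))\<^sup>2 = 1/4 * (cmod (\<Delta> l j))\<^sup>2" for j
        unfolding \<Delta>_def dd by (simp add: norm_divide power_divide)
      show ?thesis unfolding Q0_def d2 sum_distrib_left ..
    qed
    have gl1: "(\<Sum>m\<in>{- int N..int N}. cmod (g m))\<^sup>2 \<le> 2 * ((1 + \<eta>) * M)\<^sup>2"
    proof -
      have "nrm s N g \<le> 1 * nrm s N a + 1 * nrm s N b"
        by (rule nrm_tri) (auto simp: g_def norm_triangle_ineq)
      also have "\<dots> \<le> (1 + \<eta>) * M" using nahb[of "Suc l"] nahb[of l] unfolding a_def b_def by simp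
      finally have "(nrm s N g)\<^sup>2 \<le> ((1 + \<eta>) * M)\<^sup>2" using nrm_nonneg[of s N g] by (intro power_mono) auto
      then show ?thesis using l1_bound[OF s2, where g=g and N=N] unfolding nrm_sq by linarith
    qed
    have "Q0 (\<Delta> (Suc l)) \<le> (\<Sum>k\<in>{- int N..int N}. (3 * dt * real N)\<^sup>2 * (cmod (cv N \<delta> g k))\<^sup>2)"
      unfolding Q0_def
    proof (rule sum_mono)
      fix k assume "k \<in> {- int N..int N}"
      then have k: "\<bar>k\<bar> \<le> int N" by auto
      have "(cmod (\<Delta> (Suc l) k))\<^sup>2 \<le> (3 * dt * real N * cmod (cv N \<delta> g k))\<^sup>2"
        using pk[OF k] by (intro power_mono) auto
      then show "(cmod (\<Delta> (Suc l) k))\<^sup>2 \<le> (3 * dt * real N)\<^sup>2 * (cmod (cv N \<delta> g k))\<^sup>2"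
        by (simp add: power_mult_distrib)
    qed
    also have "\<dots> = (3 * dt * real N)\<^sup>2 * (\<Sum>k\<in>{- int N..int N}. (cmod (\<Sum>j\<in>{- int N..int N}. \<delta> j * g (k - j)))\<^sup>2)"
      unfolding cv_def by (simp add: sum_distrib_left)
    also have "\<dots> \<le> (3 * dt * real N)\<^sup>2 * ((\<Sum>m\<in>{- int N..int N}. cmod (g m))\<^sup>2 * (\<Sum>j\<in>{- int N..int N}. (cmod (\<delta> j))\<^sup>2))"
      by (intro mult_left_mono young[OF sg]) auto
    also have "\<dots> \<le> (3 * dt * real N)\<^sup>2 * ((2 * ((1 + \<eta>) * M)\<^sup>2) * (1/4 * Q0 (\<Delta> l)))"
      unfolding dl using gl1 Q0nn[of "\<Delta> l"] by (intro mult_left_mono mult_right_mono) auto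
    also have "\<dots> = (9 / 2 * X\<^sup>2) * Q0 (\<Delta> l)"
      unfolding X_def by (simp add: power2_eq_square)
    also have "\<dots> \<le> 1/4 * Q0 (\<Delta> l)"
    proof (rule mult_right_mono)
      have "X\<^sup>2 \<le> (3/16)\<^sup>2" using X0 X316 by (intro power_mono) auto
      then show "9 / 2 * X\<^sup>2 \<le> 1/4" by (simp add: power2_eq_square)
    qed (rule Q0nn)
    finally show ?thesis .
  qed
  define D where "D = Q0 (\<Delta> 0)"
  have geo: "Q0 (\<Delta> l) \<le> (1/4) ^ l * D" for l
  proof (induction l)
    case 0 then show ?case unfolding D_def by simp
  next
    case (Suc l)
    have "Q0 (\<Delta> (Suc l)) \<le> 1/4 * Q0 (\<Delta> l)" by (rule contr)
    also have "\<dots> \<le> 1/4 * ((1/4) ^ l * D)" using Suc.IH by simp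
    finally show ?case by simp
  qed
  have D0: "0 \<le> D" unfolding D_def by (rule Q0nn)
  have coord: "cmod (V (Suc l) k - V l k) \<le> sqrt D * (1/2) ^ l" for l k
  proof (cases "k \<in> {- int N..int N}")
    case True
    have "(cmod (\<Delta> l k))\<^sup>2 \<le> Q0 (\<Delta> l)"
      unfolding Q0_def by (rule member_le_sum) (use True in auto)
    also have "\<dots> \<le> (1/4) ^ l * D" by (rule geo)
    also have "\<dots> = (sqrt D * (1/2) ^ l)\<^sup>2"
    proof -
      have "((1/2::real) ^ l)\<^sup>2 = (1/4) ^ l"
        by (simp add: power2_eq_square power_mult_distrib[symmetric])
      then show ?thesis using D0 by (simp add: power_mult_distrib)
    qed
    finally have "(cmod (\<Delta> l k))\<^sup>2 \<le> (sqrt D * (1/2) ^ l)\<^sup>2" .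
    then show ?thesis unfolding \<Delta>_def by (rule power2_le_imp_le) (use D0 in simp)
  next
    case False
    then have "V (Suc l) k = 0" "V l k = 0" using supp_z[OF sV] by auto
    then show ?thesis using D0 by simp
  qed
  have cvg: "convergent (\<lambda>l. V l k)" for k
    by (rule conv_diff[of _ "sqrt D" "1/2"]) (use coord in auto)
  define W where "W = (\<lambda>k. lim (\<lambda>l. V l k))"
  have VW: "(\<lambda>l. V l k) \<longlonglongrightarrow> W k" for k
    unfolding W_def using cvg convergent_LIMSEQ_iff by blast
  have sW: "supp N W"
    unfolding supp_def
  proof (intro allI impI)
    fix k assume "int N < \<bar>k\<bar>"
    then have "(\<lambda>l. V l k) = (\<lambda>l. 0)" using sV unfolding supp_def by auto
    then have "(\<lambda>l. V l k) \<longlonglongrightarrow> 0" by simp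
    then show "W k = 0" using VW[of k] LIMSEQ_unique by blast
  qed
  have hW: "herm N W"
    unfolding herm_def
  proof (intro allI impI)
    fix k assume k: "\<bar>k\<bar> \<le> int N"
    have "V l (- k) = cnj (V l k)" for l using real_herm[OF hV[of l]] k unfolding herm_def by blast
    then have "(\<lambda>l. V l (- k)) = (\<lambda>l. cnj (V l k))" by simp
    then have "(\<lambda>l. V l (- k)) \<longlonglongrightarrow> cnj (W k)" using tendsto_cnj[OF VW[of k]] by simp
    then show "W (- k) = cnj (W k)" using VW[of "- k"] LIMSEQ_unique by blast
  qed
  define U1 where "U1 = (\<lambda>x. Re (tp N W x))"
  have h1: "\<forall>x. complex_of_real (U1 x) = tp N W x" unfolding U1_def using herm_real[OF hW] by simp
  have U1_VN: "U1 \<in> VN N" by (rule tp_VN[OF h1])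
  have conv: "(\<lambda>l. sob_norm 0 (\<lambda>x. v l x - U1 x)) \<longlonglongrightarrow> 0"
  proof -
    have hd: "\<forall>x. complex_of_real (v l x - U1 x) = tp N (\<lambda>k. V l k - W k) x" for l
      unfolding tp_diff using hV h1 by simp
    have e: "sob_norm 0 (\<lambda>x. v l x - U1 x) = sqrt (\<Sum>k = - int N..int N. (1 + (of_int k)\<^sup>2) powr 0 * (cmod (V l k - W k))\<^sup>2)" for l
      using sob_tp[OF hd[of l]] .
    have "(\<lambda>l. sqrt (\<Sum>k = - int N..int N. (1 + (of_int k)\<^sup>2) powr 0 * (cmod (V l k - W k))\<^sup>2))
        \<longlonglongrightarrow> sqrt (\<Sum>k = - int N..int N. (1 + (of_int k)\<^sup>2) powr 0 * (cmod (W k - W k))\<^sup>2)"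
      by (intro tendsto_intros VW)
    then show ?thesis unfolding e by simp
  qed
  have Wid: "W k = U k - complex_of_real dt * (6 * cv N (\<lambda>j. (U j + W j) / 2) (\<lambda>j. \<i> * of_int j * ((U j + W j) / 2)) k)
      + complex_of_real (\<epsilon>\<^sup>2 * dt) * (\<i> * of_int k * (complex_of_real (\<bar>of_int k\<bar> powr \<alpha>) * ((U k + W k) / 2)))"
    if k: "\<bar>k\<bar> \<le> int N" for k
  proof -
    define RHS where "RHS = (\<lambda>l. U k - complex_of_real dt * (6 * C l k)
      + complex_of_real c * (\<i> * of_int k * (complex_of_real (\<bar>of_int k\<bar> powr \<alpha>) * (U k + V (Suc l) k))))"
    have r1: "(\<lambda>l. V (Suc l) k) = RHS" unfolding RHS_def using Fe[OF k] by (intro ext) blast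
    have r2: "RHS \<longlonglongrightarrow> W k" using LIMSEQ_Suc[OF VW[of k]] unfolding r1 .
    have r3: "RHS \<longlonglongrightarrow> U k - complex_of_real dt * (6 * cv N (\<lambda>j. (U j + W j) / 2) (\<lambda>j. \<i> * of_int j * ((U j + W j) / 2)) k)
      + complex_of_real c * (\<i> * of_int k * (complex_of_real (\<bar>of_int k\<bar> powr \<alpha>) * (U k + W k)))"
      unfolding RHS_def C_def cv_def ah_def by (intro tendsto_intros VW LIMSEQ_Suc[OF VW]) auto
    have "W k = U k - complex_of_real dt * (6 * cv N (\<lambda>j. (U j + W j) / 2) (\<lambda>j. \<i> * of_int j * ((U j + W j) / 2)) k)
      + complex_of_real c * (\<i> * of_int k * (complex_of_real (\<bar>of_int k\<bar> powr \<alpha>) * (U k + W k)))"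
      using LIMSEQ_unique[OF r2 r3] .
    then show ?thesis unfolding c_def by (simp add: algebra_simps)
  qed
  have eqU1: "\<forall>\<phi>\<in>VN N. l2inner U1 \<phi>
              = l2inner U0 \<phi>
                - 6 * dt * l2inner (\<lambda>x. (U0 x + U1 x) / 2 * deriv (\<lambda>y. (U0 y + U1 y) / 2) x) \<phi>
                + \<epsilon>\<^sup>2 * dt * l2inner (deriv (fracD \<alpha> (\<lambda>y. (U0 y + U1 y) / 2))) \<phi>"
    by (rule eq_from_coef[OF h1 hU sU sW]) (use Wid in blast)
  have bndW: "sob_norm (1 + \<alpha>) U1 \<le> \<eta> * sob_norm (1 + \<alpha>) U0"
  proof -
    have e: "sob_norm (1 + \<alpha>) U1 = nrm s N W" unfolding nrm_def wt_def s_def using sob_tp[OF h1] by simp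
    have "(\<lambda>l. \<Sum>k\<in>{- int N..int N}. wt s k * (cmod (V l k))\<^sup>2) \<longlonglongrightarrow> (\<Sum>k\<in>{- int N..int N}. wt s k * (cmod (W k))\<^sup>2)"
      by (intro tendsto_intros VW)
    moreover have "(\<Sum>k\<in>{- int N..int N}. wt s k * (cmod (V l k))\<^sup>2) \<le> (\<eta> * M)\<^sup>2" for l
      unfolding nrm_sq[symmetric] using bnd[of l] nrm_nonneg[of s N "V l"] by (intro power_mono) auto
    ultimately have "(\<Sum>k\<in>{- int N..int N}. wt s k * (cmod (W k))\<^sup>2) \<le> (\<eta> * M)\<^sup>2"
      by (intro LIMSEQ_le_const2) auto
    then have "(nrm s N W)\<^sup>2 \<le> (\<eta> * M)\<^sup>2" unfolding nrm_sq .
    then have "nrm s N W \<le> \<eta> * M" by (rule power2_le_imp_le) (use eta8 M0 in simp)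
    then show ?thesis unfolding e M_def .
  qed
  show ?thesis using U1_VN conv eqU1 bndW by blast
qed

end
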